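(* The quotient space $\widehat M=M/\mathbb{Z}_3$ is simply connected.
   Context: Let $G=\mathbb{R}^6$ with coordinates $(y_1,y_2,z_1,z_2,v_1,v_2)$ and multiplication $(y',z',v')\cdot(y,z,v)=\big(y_1+y_1',y_2+y_2',z_1+z_1',z_2+z_2',\ v_1+v_1'+(y_1'-y_2')z_1-(y_1'+2y_2')z_2,\ v_2+v_2'-(2y_1'+y_2')z_1+(y_2'-y_1')z_2\big)$; let $\Gamma=\{(y,z,v)\in\mathbb{Z}^6: v_1\equiv v_2\pmod 3\}$ (a discrete cocompact subgroup) and $N=\Gamma\backslash G$ (quotient by left multiplication). Let $T^2=\mathbb{Z}^2\backslash\mathbb{R}^2$ with coordinates $(x_1,x_2)$ and $M=T^2\times N$, a compact 8-dimensional nilmanifold. The map $\rho(x_1,x_2,y_1,y_2,z_1,z_2,v_1,v_2)=(-x_1-x_2,x_1,-y_1-y_2,y_1,-z_1-z_2,z_1,-v_1-v_2,v_1)$ is a Lie group automorphism of $\mathbb{R}^2\times G$ preserving $\mathbb{Z}^2\times\Gamma$, hence descends to a diffeomorphism of $M$ of order 3, generating a $\mathbb{Z}_3$-action on $M$ with $81$ fixed points. $\widehat M=M/\mathbb{Z}_3$. *)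

theory Defs
  imports "HOL-Analysis.Analysis"
begin

(* Points of R^2 x G = R^8, coordinates (x1,x2,y1,y2,z1,z2,v1,v2) *)
type_synonym pt = "real \<times> real \<times> real \<times> real \<times> real \<times> real \<times> real \<times> real"

fun mul :: "pt \<Rightarrow> pt \<Rightarrow> pt" where
  "mul (x1', x2', y1', y2', z1', z2', v1', v2') (x1, x2, y1, y2, z1, z2, v1, v2) =
     (x1 + x1', x2 + x2', y1 + y1', y2 + y2', z1 + z1', z2 + z2',
      v1 + v1' + (y1' - y2') * z1 - (y1' + 2 * y2') * z2,
      v2 + v2' - (2 * y1' + y2') * z1 + (y2' - y1') * z2)"

definition Lambda :: "pt set" where
  "Lambda = {(of_int x1, of_int x2, of_int y1, of_int y2, of_int z1, of_int z2, of_int v1, of_int v2)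
              | x1 x2 y1 y2 z1 z2 v1 v2 :: int. v1 mod 3 = v2 mod 3}"

fun rho :: "pt \<Rightarrow> pt" where
  "rho (x1, x2, y1, y2, z1, z2, v1, v2) =
     (- x1 - x2, x1, - y1 - y2, y1, - z1 - z2, z1, - v1 - v2, v1)"

definition quotient_topology :: "'a topology \<Rightarrow> ('a \<times> 'a) set \<Rightarrow> 'a set topology" where
  "quotient_topology X R =
     topology (\<lambda>U. U \<subseteq> topspace X // R \<and> openin X (\<Union>U))"

definition M_rel :: "(pt \<times> pt) set" where
  "M_rel = {(p, mul g p) | g p. g \<in> Lambda}"

definition M_top :: "pt set topology" where
  "M_top = quotient_topology euclidean M_rel"

(* the induced diffeomorphism of M: [p] \<mapsto> [rho p] *)
definition rho_M :: "pt set \<Rightarrow> pt set" where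
  "rho_M c = M_rel `` (rho ` c)"

definition Z3_rel :: "(pt set \<times> pt set) set" where
  "Z3_rel = {(c, (rho_M ^^ k) c) | c k. c \<in> topspace M_top \<and> k < 3}"

definition Mhat_top :: "pt set set topology" where
  "Mhat_top = quotient_topology M_top Z3_rel"

definition simply_connected_space :: "'a topology \<Rightarrow> bool" where
  "simply_connected_space X \<longleftrightarrow>
     path_connected_space X \<and>
     (\<forall>p. pathin X p \<and> p 1 = p 0 \<longrightarrow>
        homotopic_with (\<lambda>h. h 0 = p 0 \<and> h 1 = p 0)
          (top_of_set {0..1}) X p (\<lambda>t. p 0))"

end

theory Submission
  imports Defs
begin


lemma pt_cases: obtains a b c d e f g h where "(p::pt) = (a,b,c,d,e,f,g,h)"
  by (metis prod.exhaust)

lemma rho3: "rho (rho (rho p)) = p"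
  by (cases p rule: pt_cases) simp

lemma mul_zero: "mul 0 p = p"
  by (cases p rule: pt_cases) (simp add: zero_prod_def)

lemma mul_assoc: "mul g (mul h p) = mul (mul g h) p"
  by (cases g rule: pt_cases; cases h rule: pt_cases; cases p rule: pt_cases) (simp add: algebra_simps)

lemma rho_mul: "rho (mul g p) = mul (rho g) (rho p)"
  by (cases g rule: pt_cases; cases p rule: pt_cases) (simp add: algebra_simps)


definition ginv :: "pt \<Rightarrow> pt" where
  "ginv g = (case g of (x1, x2, y1, y2, z1, z2, v1, v2) \<Rightarrow>
     (-x1, -x2, -y1, -y2, -z1, -z2, -v1 + (y1 - y2) * z1 - (y1 + 2*y2) * z2,
      -v2 - (2*y1 + y2) * z1 + (y2 - y1) * z2))"

lemma ginv_mul: "mul (ginv g) (mul g p) = p"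
  by (cases g rule: pt_cases; cases p rule: pt_cases) (simp add: ginv_def algebra_simps)

lemma mul_ginv: "mul g (mul (ginv g) p) = p"
  by (cases g rule: pt_cases; cases p rule: pt_cases) (simp add: ginv_def algebra_simps)

lemma Lambda_iff: "(a1,a2,a3,a4,a5,a6,a7,a8) \<in> Lambda \<longleftrightarrow>
  (\<exists>x1 x2 y1 y2 z1 z2 v1 v2 :: int. a1 = of_int x1 \<and> a2 = of_int x2 \<and> a3 = of_int y1 \<and> a4 = of_int y2
     \<and> a5 = of_int z1 \<and> a6 = of_int z2 \<and> a7 = of_int v1 \<and> a8 = of_int v2 \<and> 3 dvd (v1 - v2))"
  unfolding Lambda_def by (auto simp: mod_eq_dvd_iff)

lemma zero_Lambda: "0 \<in> Lambda"
  unfolding zero_prod_def Lambda_iff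
  by (rule exI[of _ 0])+ simp

lemma mul_Lambda: assumes "g \<in> Lambda" "h \<in> Lambda" shows "mul g h \<in> Lambda"
proof -
  obtain x1 x2 y1 y2 z1 z2 v1 v2 :: int where g: "g = (of_int x1, of_int x2, of_int y1, of_int y2,
     of_int z1, of_int z2, of_int v1, of_int v2)" and dg: "3 dvd (v1 - v2)"
    using assms(1) by (cases g rule: pt_cases) (auto simp: Lambda_iff)
  obtain x1' x2' y1' y2' z1' z2' v1' v2' :: int where h: "h = (of_int x1', of_int x2', of_int y1', of_int y2',
     of_int z1', of_int z2', of_int v1', of_int v2')" and dh: "3 dvd (v1' - v2')"
    using assms(2) by (cases h rule: pt_cases) (auto simp: Lambda_iff)
  obtain k where k: "v1 - v2 = 3 * k" using dg by auto
  obtain k' where k': "v1' - v2' = 3 * k'" using dh by auto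
  have "3 dvd ((v1' + v1 + (y1 - y2) * z1' - (y1 + 2 * y2) * z2') - (v2' + v2 - (2 * y1 + y2) * z1' + (y2 - y1) * z2'))"
  proof -
    have "(v1' + v1 + (y1 - y2) * z1' - (y1 + 2 * y2) * z2') - (v2' + v2 - (2 * y1 + y2) * z1' + (y2 - y1) * z2')
        = 3 * (k + k' + y1 * z1' - y2 * z2')" using k k' by (simp add: algebra_simps)
    then show ?thesis by (metis dvd_triv_left)
  qed
  note d = this
  show ?thesis unfolding g h mul.simps Lambda_iff
    apply (rule exI[of _ "x1' + x1"], rule exI[of _ "x2' + x2"], rule exI[of _ "y1' + y1"], rule exI[of _ "y2' + y2"])
    apply (rule exI[of _ "z1' + z1"], rule exI[of _ "z2' + z2"])
    apply (rule exI[of _ "v1' + v1 + (y1 - y2) * z1' - (y1 + 2 * y2) * z2'"])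
    apply (rule exI[of _ "v2' + v2 - (2 * y1 + y2) * z1' + (y2 - y1) * z2'"])
    using d by simp
qed

lemma ginv_Lambda: assumes "g \<in> Lambda" shows "ginv g \<in> Lambda"
proof -
  obtain x1 x2 y1 y2 z1 z2 v1 v2 :: int where g: "g = (of_int x1, of_int x2, of_int y1, of_int y2,
     of_int z1, of_int z2, of_int v1, of_int v2)" and dg: "3 dvd (v1 - v2)"
    using assms(1) by (cases g rule: pt_cases) (auto simp: Lambda_iff)
  obtain k where k: "v1 - v2 = 3 * k" using dg by auto
  have "3 dvd ((-v1 + (y1 - y2) * z1 - (y1 + 2*y2) * z2) - (-v2 - (2*y1 + y2) * z1 + (y2 - y1) * z2))"
  proof -
    have "(-v1 + (y1 - y2) * z1 - (y1 + 2*y2) * z2) - (-v2 - (2*y1 + y2) * z1 + (y2 - y1) * z2)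
        = 3 * (- k + y1 * z1 - y2 * z2)" using k by (simp add: algebra_simps)
    then show ?thesis by (metis dvd_triv_left)
  qed
  note d = this
  show ?thesis unfolding g ginv_def prod.case Lambda_iff
    apply (rule exI[of _ "-x1"], rule exI[of _ "-x2"], rule exI[of _ "-y1"], rule exI[of _ "-y2"])
    apply (rule exI[of _ "-z1"], rule exI[of _ "-z2"])
    apply (rule exI[of _ "-v1 + (y1 - y2) * z1 - (y1 + 2*y2) * z2"])
    apply (rule exI[of _ "-v2 - (2*y1 + y2) * z1 + (y2 - y1) * z2"])
    using d by simp
qed

lemma rho_Lambda: assumes "g \<in> Lambda" shows "rho g \<in> Lambda"
proof -
  obtain x1 x2 y1 y2 z1 z2 v1 v2 :: int where g: "g = (of_int x1, of_int x2, of_int y1, of_int y2,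
     of_int z1, of_int z2, of_int v1, of_int v2)" and dg: "3 dvd (v1 - v2)"
    using assms(1) by (cases g rule: pt_cases) (auto simp: Lambda_iff)
  obtain k where k: "v1 - v2 = 3 * k" using dg by auto
  have "3 dvd ((-v1 - v2) - v1)"
  proof -
    have "(-v1 - v2) - v1 = 3 * (- v1 + k)" using k by (simp add: algebra_simps)
    then show ?thesis by (metis dvd_triv_left)
  qed
  note d = this
  show ?thesis unfolding g rho.simps Lambda_iff
    apply (rule exI[of _ "-x1-x2"], rule exI[of _ "x1"], rule exI[of _ "-y1-y2"], rule exI[of _ "y1"])
    apply (rule exI[of _ "-z1-z2"], rule exI[of _ "z1"])
    apply (rule exI[of _ "-v1-v2"])
    apply (rule exI[of _ "v1"])
    using d by simp
qed


lemma qt_istopology: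
  assumes eq: "equiv (topspace X) R"
  shows "istopology (\<lambda>U. U \<subseteq> topspace X // R \<and> openin X (\<Union>U))"
  unfolding istopology_def
proof (rule conjI; intro allI impI)
  fix S T assume S: "S \<subseteq> topspace X // R \<and> openin X (\<Union>S)" and T: "T \<subseteq> topspace X // R \<and> openin X (\<Union>T)"
  have "\<Union>(S \<inter> T) = \<Union>S \<inter> \<Union>T"
  proof
    show "\<Union>S \<inter> \<Union>T \<subseteq> \<Union>(S \<inter> T)"
    proof
      fix x assume "x \<in> \<Union>S \<inter> \<Union>T"
      then obtain A B where AB: "A \<in> S" "B \<in> T" "x \<in> A" "x \<in> B" by blast
      then have "A = B" using quotient_disj[OF eq, of A B] S T by blast
      then show "x \<in> \<Union>(S \<inter> T)" using AB by blast
    qed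
  qed blast
  then show "S \<inter> T \<subseteq> topspace X // R \<and> openin X (\<Union>(S \<inter> T))"
    using S T by auto
next
  fix K assume K: "\<forall>S\<in>K. S \<subseteq> topspace X // R \<and> openin X (\<Union>S)"
  have "\<Union>(\<Union>K) = \<Union>((\<lambda>S. \<Union>S) ` K)" by blast
  then show "\<Union>K \<subseteq> topspace X // R \<and> openin X (\<Union>(\<Union>K))"
    using K by auto
qed

lemma openin_qt:
  assumes eq: "equiv (topspace X) R"
  shows "openin (quotient_topology X R) U \<longleftrightarrow> U \<subseteq> topspace X // R \<and> openin X (\<Union>U)"
  unfolding quotient_topology_def topology_inverse'[OF qt_istopology[OF eq]] ..

lemma topspace_qt:
  assumes eq: "equiv (topspace X) R"
  shows "topspace (quotient_topology X R) = topspace X // R"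
proof -
  have "openin (quotient_topology X R) (topspace X // R)"
    unfolding openin_qt[OF eq] Union_quotient[OF eq] by simp
  then show ?thesis unfolding topspace_def openin_qt[OF eq] by blast
qed

lemma M_rel_iff: "(p, p') \<in> M_rel \<longleftrightarrow> (\<exists>g\<in>Lambda. p' = mul g p)"
  unfolding M_rel_def by blast

lemma equiv_M_rel: "equiv UNIV M_rel"
proof (rule equivI)
  show "refl_on UNIV M_rel" unfolding refl_on_def M_rel_iff
    using zero_Lambda mul_zero by metis
  show "sym M_rel" unfolding sym_def M_rel_iff
    using ginv_Lambda ginv_mul by metis
  show "trans M_rel" unfolding trans_def M_rel_iff
    using mul_Lambda mul_assoc by metis
qed auto

definition cls :: "pt \<Rightarrow> pt set" where "cls p = M_rel `` {p}"

lemma cls_eq_iff: "cls p = cls p' \<longleftrightarrow> (\<exists>g\<in>Lambda. p' = mul g p)"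
  unfolding cls_def eq_equiv_class_iff[OF equiv_M_rel UNIV_I UNIV_I] M_rel_iff ..

lemma mem_cls: "x \<in> cls p \<longleftrightarrow> (\<exists>g\<in>Lambda. x = mul g p)"
  unfolding cls_def Image_singleton_iff M_rel_iff ..

lemma cls_self: "p \<in> cls p"
  unfolding cls_def using equiv_class_self[OF equiv_M_rel] by simp

lemma mem_cls_eq: "x \<in> cls p \<Longrightarrow> cls x = cls p"
proof -
  assume "x \<in> cls p"
  then have "(p, x) \<in> M_rel" unfolding cls_def by simp
  then show ?thesis unfolding cls_def using equiv_class_eq[OF equiv_M_rel] by simp
qed

lemma topspace_M: "topspace M_top = range cls"
  unfolding M_top_def topspace_qt[of euclidean, simplified, OF equiv_M_rel] quotient_def cls_def
  by blast

lemma rho_M_cls: "rho_M (cls p) = cls (rho p)"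
proof
  show "rho_M (cls p) \<subseteq> cls (rho p)"
    unfolding rho_M_def
  proof
    fix x assume "x \<in> M_rel `` (rho ` cls p)"
    then obtain y where y: "y \<in> cls p" "(rho y, x) \<in> M_rel" by blast
    then obtain g where g: "g \<in> Lambda" "y = mul g p" using mem_cls by blast
    obtain h where h: "h \<in> Lambda" "x = mul h (rho y)" using y M_rel_iff by blast
    have "x = mul (mul h (rho g)) (rho p)" using g h rho_mul mul_assoc by metis
    then show "x \<in> cls (rho p)" unfolding mem_cls using g h rho_Lambda mul_Lambda by blast
  qed
  show "cls (rho p) \<subseteq> rho_M (cls p)"
    unfolding rho_M_def
  proof
    fix x assume "x \<in> cls (rho p)"
    then have "(rho p, x) \<in> M_rel" unfolding cls_def by blast
    moreover have "p \<in> cls p" unfolding mem_cls using zero_Lambda mul_zero by metis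
    ultimately show "x \<in> M_rel `` (rho ` cls p)" by blast
  qed
qed

lemma rho_M_pow: "(rho_M ^^ k) (cls p) = cls ((rho ^^ k) p)"
  by (induction k) (simp_all add: rho_M_cls)

lemma rho_pow3: "(rho ^^ 3) p = p"
  by (simp add: numeral_3_eq_3 rho3)

lemma rho_pow3m: "(rho ^^ (3 * m)) p = p"
proof (induction m)
  case (Suc m)
  have "(rho ^^ (3 * Suc m)) p = (rho ^^ 3) ((rho ^^ (3 * m)) p)"
    by (simp add: funpow_add)
  then show ?case using Suc rho_pow3 by simp
qed simp

lemma rho_pow_mod: "(rho ^^ k) p = (rho ^^ (k mod 3)) p"
proof -
  have "k = k mod 3 + 3 * (k div 3)" by simp
  then have "(rho ^^ k) p = (rho ^^ (k mod 3)) ((rho ^^ (3 * (k div 3))) p)"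
    by (metis funpow_add comp_apply)
  then show ?thesis using rho_pow3m by simp
qed

lemma Z3_rel_iff0: "(c, d) \<in> Z3_rel \<longleftrightarrow> (\<exists>k. c \<in> range cls \<and> k < 3 \<and> d = (rho_M ^^ k) c)"
  unfolding Z3_rel_def topspace_M by blast

lemma rho_pow_add: "(rho ^^ a) ((rho ^^ b) p) = (rho ^^ (a + b)) p"
  by (simp add: funpow_add)

lemma Z3_rel_iff: "(c, d) \<in> Z3_rel \<longleftrightarrow> (\<exists>p k. c = cls p \<and> k < 3 \<and> d = cls ((rho ^^ k) p))"
proof
  assume "(c, d) \<in> Z3_rel"
  then obtain k where k: "c \<in> range cls" "k < 3" "d = (rho_M ^^ k) c" unfolding Z3_rel_iff0 by blast
  then obtain p where p: "c = cls p" by blast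
  then have "d = cls ((rho ^^ k) p)" using k(3) rho_M_pow by simp
  then show "\<exists>p k. c = cls p \<and> k < 3 \<and> d = cls ((rho ^^ k) p)" using p k(2) by blast
next
  assume "\<exists>p k. c = cls p \<and> k < 3 \<and> d = cls ((rho ^^ k) p)"
  then obtain p k where pk: "c = cls p" "k < 3" "d = cls ((rho ^^ k) p)" by blast
  then have "d = (rho_M ^^ k) c" using rho_M_pow by simp
  then show "(c, d) \<in> Z3_rel" unfolding Z3_rel_iff0 using pk by blast
qed

lemma equiv_Z3: "equiv (topspace M_top) Z3_rel"
proof (rule equivI)
  show "Z3_rel \<subseteq> topspace M_top \<times> topspace M_top"
    unfolding topspace_M
  proof
    fix x assume "x \<in> Z3_rel"
    then obtain a b where x: "x = (a,b)" "(a,b) \<in> Z3_rel" by (metis surj_pair)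
    then obtain p k where "a = cls p" "b = cls ((rho^^k) p)" unfolding Z3_rel_iff by blast
    then show "x \<in> range cls \<times> range cls" using x by blast
  qed
  show "refl_on (topspace M_top) Z3_rel" unfolding refl_on_def topspace_M
  proof (intro ballI)
    fix c assume "c \<in> range cls"
    moreover have "c = (rho_M ^^ 0) c" by simp
    ultimately show "(c, c) \<in> Z3_rel" unfolding Z3_rel_iff0 by (intro exI[of _ "0::nat"]) simp
  qed
  show "sym Z3_rel" unfolding sym_def Z3_rel_iff
  proof (intro allI impI)
    fix x y assume "\<exists>p k. x = cls p \<and> k < 3 \<and> y = cls ((rho ^^ k) p)"
    then obtain p k where pk: "x = cls p" "k < 3" "y = cls ((rho ^^ k) p)" by blast
    have "(rho ^^ ((3 - k) mod 3)) ((rho ^^ k) p) = (rho ^^ ((3 - k) mod 3 + k)) p"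
      by (rule rho_pow_add)
    also have "\<dots> = (rho ^^ (((3 - k) mod 3 + k) mod 3)) p"
      by (rule rho_pow_mod)
    also have "((3 - k) mod 3 + k) mod 3 = 0" using pk(2) by (auto simp: mod_if)
    finally have "x = cls ((rho ^^ ((3 - k) mod 3)) ((rho ^^ k) p))" using pk by simp
    moreover have "(3 - k) mod 3 < 3" by simp
    ultimately show "\<exists>p k. y = cls p \<and> k < 3 \<and> x = cls ((rho ^^ k) p)" using pk by blast
  qed
  show "trans Z3_rel" unfolding trans_def Z3_rel_iff
  proof (intro allI impI)
    fix x y z assume "\<exists>p k. x = cls p \<and> k < 3 \<and> y = cls ((rho ^^ k) p)"
      "\<exists>p k. y = cls p \<and> k < 3 \<and> z = cls ((rho ^^ k) p)"
    then obtain p k p' k' where pk: "x = cls p" "k < 3" "y = cls ((rho ^^ k) p)"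
      "y = cls p'" "k' < 3" "z = cls ((rho ^^ k') p')" by blast
    have "cls ((rho ^^ k) p) = cls p'" using pk by simp
    then obtain g where g: "g \<in> Lambda" "p' = mul g ((rho ^^ k) p)" unfolding cls_eq_iff by blast
    have rp: "(rho ^^ k') (mul g r) = mul ((rho ^^ k') g) ((rho ^^ k') r)" for r
      by (induction k') (simp_all add: rho_mul)
    have rl: "(rho ^^ k') g \<in> Lambda" using g(1) by (induction k') (simp_all add: rho_Lambda)
    have "(rho ^^ k') p' = mul ((rho ^^ k') g) ((rho ^^ (k' + k)) p)"
      using g rp by (simp add: funpow_add)
    then have "cls ((rho ^^ (k' + k)) p) = cls ((rho ^^ k') p')" unfolding cls_eq_iff using rl by blast
    also have "(rho ^^ (k' + k)) p = (rho ^^ ((k' + k) mod 3)) p" by (rule rho_pow_mod)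
    finally have "z = cls ((rho ^^ ((k' + k) mod 3)) p)" using pk by simp
    moreover have "(k' + k) mod 3 < 3" by simp
    ultimately show "\<exists>p k. x = cls p \<and> k < 3 \<and> z = cls ((rho ^^ k) p)" using pk by blast
  qed
qed

definition q :: "pt \<Rightarrow> pt set set" where "q p = Z3_rel `` {cls p}"

lemma q_eq_iff: "q p = q p' \<longleftrightarrow> (\<exists>g\<in>Lambda. \<exists>k<3. p' = mul g ((rho ^^ k) p))"
proof -
  have "q p = q p' \<longleftrightarrow> (cls p, cls p') \<in> Z3_rel"
    unfolding q_def by (rule eq_equiv_class_iff[OF equiv_Z3]) (simp_all add: topspace_M)
  also have "\<dots> \<longleftrightarrow> (\<exists>k<3. cls ((rho ^^ k) p) = cls p')"
    unfolding Z3_rel_iff by (metis rho_M_pow)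
  also have "\<dots> \<longleftrightarrow> (\<exists>g\<in>Lambda. \<exists>k<3. p' = mul g ((rho ^^ k) p))"
    unfolding cls_eq_iff by blast
  finally show ?thesis .
qed

lemma q_eq_Z3: "q p = q p' \<longleftrightarrow> (cls p, cls p') \<in> Z3_rel"
    unfolding q_def by (rule eq_equiv_class_iff[OF equiv_Z3]) (simp_all add: topspace_M)

lemma cls_in_q: "cls p \<in> q p"
  unfolding q_def by (rule equiv_class_self[OF equiv_Z3]) (simp add: topspace_M)

lemma topspace_Mhat: "topspace Mhat_top = range q"
  unfolding Mhat_top_def topspace_qt[OF equiv_Z3] topspace_M quotient_def q_def
  by (simp add: UNION_singleton_eq_range image_image)

lemma openin_Mhat: "openin Mhat_top U \<longleftrightarrow> U \<subseteq> range q \<and> open (q -` U)"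
proof -
  have M: "openin M_top V \<longleftrightarrow> V \<subseteq> range cls \<and> open (\<Union>V)" for V
    unfolding M_top_def openin_qt[of euclidean, simplified, OF equiv_M_rel]
    using topspace_M[unfolded M_top_def topspace_qt[of euclidean, simplified, OF equiv_M_rel]] by simp
  have R: "range q = topspace M_top // Z3_rel"
    using topspace_Mhat unfolding Mhat_top_def topspace_qt[OF equiv_Z3] by simp
  have key: "\<Union>(\<Union>U) = q -` U" if U: "U \<subseteq> range q"
  proof
    show "\<Union>(\<Union>U) \<subseteq> q -` U"
    proof
      fix x assume "x \<in> \<Union>(\<Union>U)"
      then obtain C c where C: "C \<in> U" "c \<in> C" "x \<in> c" by blast
      obtain p where p: "C = q p" using U C by blast
      have "(cls p, c) \<in> Z3_rel" using C p unfolding q_def by blast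
      then obtain p0 k where "cls p = cls p0" "k < 3" "c = cls ((rho ^^ k) p0)" unfolding Z3_rel_iff by blast
      then have c1: "c = cls ((rho ^^ k) p)" by (metis rho_M_pow)
      define p' where "p' = (rho ^^ k) p"
      have c: "c = cls p'" "(cls p, cls p') \<in> Z3_rel" using c1 p'_def \<open>(cls p, c) \<in> Z3_rel\<close> by simp_all
      have "cls x = cls p'" using C(3) c(1) mem_cls_eq by simp
      then have "q x = q p'" unfolding q_def by simp
      also have "q p' = q p" unfolding q_eq_Z3
        using c(2) equiv_Z3 by (meson equivE symD)
      finally show "x \<in> q -` U" using C p by simp
    qed
    show "q -` U \<subseteq> \<Union>(\<Union>U)"
    proof
      fix x assume "x \<in> q -` U"
      moreover have "cls x \<in> q x" by (rule cls_in_q)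
      moreover have "x \<in> cls x" by (rule cls_self)
      ultimately show "x \<in> \<Union>(\<Union>U)" by blast
    qed
  qed
  have sub: "\<Union>U \<subseteq> range cls" if U: "U \<subseteq> range q" for U
  proof
    fix c assume "c \<in> \<Union>U"
    then obtain p where "c \<in> q p" using U by blast
    then have "(cls p, c) \<in> Z3_rel" unfolding q_def by simp
    then show "c \<in> range cls" unfolding Z3_rel_iff by blast
  qed
  show ?thesis
  proof (cases "U \<subseteq> range q")
    case True
    then show ?thesis unfolding Mhat_top_def openin_qt[OF equiv_Z3] M R[symmetric]
      using key[OF True] sub[OF True] by simp
  next
    case False
    then show ?thesis unfolding Mhat_top_def openin_qt[OF equiv_Z3] M R[symmetric] by simp
  qed
qed


definition P1 :: "pt \<Rightarrow> real" where "P1 p = fst p"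
definition P2 :: "pt \<Rightarrow> real" where "P2 p = fst (snd p)"
definition P3 :: "pt \<Rightarrow> real" where "P3 p = fst (snd (snd p))"
definition P4 :: "pt \<Rightarrow> real" where "P4 p = fst (snd (snd (snd p)))"
definition P5 :: "pt \<Rightarrow> real" where "P5 p = fst (snd (snd (snd (snd p))))"
definition P6 :: "pt \<Rightarrow> real" where "P6 p = fst (snd (snd (snd (snd (snd p)))))"
definition P7 :: "pt \<Rightarrow> real" where "P7 p = fst (snd (snd (snd (snd (snd (snd p))))))"
definition P8 :: "pt \<Rightarrow> real" where "P8 p = snd (snd (snd (snd (snd (snd (snd p))))))"

lemmas Pdefs = P1_def P2_def P3_def P4_def P5_def P6_def P7_def P8_def

lemma P_simps [simp]:
  "P1 (a1,a2,a3,a4,a5,a6,a7,a8) = a1" "P2 (a1,a2,a3,a4,a5,a6,a7,a8) = a2"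
  "P3 (a1,a2,a3,a4,a5,a6,a7,a8) = a3" "P4 (a1,a2,a3,a4,a5,a6,a7,a8) = a4"
  "P5 (a1,a2,a3,a4,a5,a6,a7,a8) = a5" "P6 (a1,a2,a3,a4,a5,a6,a7,a8) = a6"
  "P7 (a1,a2,a3,a4,a5,a6,a7,a8) = a7" "P8 (a1,a2,a3,a4,a5,a6,a7,a8) = a8"
  by (simp_all add: Pdefs)

lemma pt_eq: "(p::pt) = (P1 p, P2 p, P3 p, P4 p, P5 p, P6 p, P7 p, P8 p)"
  by (simp add: Pdefs)

lemma pt_eq_iff: "(p::pt) = p' \<longleftrightarrow> P1 p = P1 p' \<and> P2 p = P2 p' \<and> P3 p = P3 p' \<and> P4 p = P4 p'
   \<and> P5 p = P5 p' \<and> P6 p = P6 p' \<and> P7 p = P7 p' \<and> P8 p = P8 p'"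
  by (metis pt_eq P_simps)

lemma P_cont [continuous_intros]:
  "continuous_on S P1" "continuous_on S P2" "continuous_on S P3" "continuous_on S P4"
  "continuous_on S P5" "continuous_on S P6" "continuous_on S P7" "continuous_on S P8"
  unfolding Pdefs by (intro continuous_intros)+

lemma P_lin:
  "P1 (p + s *\<^sub>R (p' - p)) = P1 p + s * (P1 p' - P1 p)"
  "P2 (p + s *\<^sub>R (p' - p)) = P2 p + s * (P2 p' - P2 p)"
  "P3 (p + s *\<^sub>R (p' - p)) = P3 p + s * (P3 p' - P3 p)"
  "P4 (p + s *\<^sub>R (p' - p)) = P4 p + s * (P4 p' - P4 p)"
  "P5 (p + s *\<^sub>R (p' - p)) = P5 p + s * (P5 p' - P5 p)"
  "P6 (p + s *\<^sub>R (p' - p)) = P6 p + s * (P6 p' - P6 p)"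
  "P7 (p + s *\<^sub>R (p' - p)) = P7 p + s * (P7 p' - P7 p)"
  "P8 (p + s *\<^sub>R (p' - p)) = P8 p + s * (P8 p' - P8 p)"
  by (simp_all add: Pdefs)

lemma P_dist:
  "\<bar>P1 p - P1 p'\<bar> \<le> dist p p'" "\<bar>P2 p - P2 p'\<bar> \<le> dist p p'"
  "\<bar>P3 p - P3 p'\<bar> \<le> dist p p'" "\<bar>P4 p - P4 p'\<bar> \<le> dist p p'"
  "\<bar>P5 p - P5 p'\<bar> \<le> dist p p'" "\<bar>P6 p - P6 p'\<bar> \<le> dist p p'"
  "\<bar>P7 p - P7 p'\<bar> \<le> dist p p'" "\<bar>P8 p - P8 p'\<bar> \<le> dist p p'"
  unfolding Pdefs dist_real_def[symmetric]
  by (meson dist_fst_le dist_snd_le order_trans)+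

lemma mul_P: "mul g p = (P1 p + P1 g, P2 p + P2 g, P3 p + P3 g, P4 p + P4 g, P5 p + P5 g, P6 p + P6 g,
   P7 p + P7 g + (P3 g - P4 g) * P5 p - (P3 g + 2 * P4 g) * P6 p,
   P8 p + P8 g - (2 * P3 g + P4 g) * P5 p + (P4 g - P3 g) * P6 p)"
  by (cases g rule: pt_cases; cases p rule: pt_cases) simp

lemma rho_P: "rho p = (- P1 p - P2 p, P1 p, - P3 p - P4 p, P3 p, - P5 p - P6 p, P5 p, - P7 p - P8 p, P7 p)"
  by (cases p rule: pt_cases) simp

lemma cont_mul: "continuous_on S (mul g)"
  unfolding mul_P by (intro continuous_intros)

lemma cont_rho: "continuous_on S rho"
  unfolding rho_P by (intro continuous_intros)

lemma mul_aff: "mul g (p + s *\<^sub>R (p' - p)) = mul g p + s *\<^sub>R (mul g p' - mul g p)"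
  unfolding mul_P P_lin by (simp add: algebra_simps)

lemma rho_aff: "rho (p + s *\<^sub>R (p' - p)) = rho p + s *\<^sub>R (rho p' - rho p)"
  unfolding rho_P P_lin by (simp add: algebra_simps)


definition act :: "pt \<Rightarrow> nat \<Rightarrow> pt \<Rightarrow> pt" where "act g k p = mul g ((rho ^^ k) p)"

lemma q_act: "g \<in> Lambda \<Longrightarrow> k < 3 \<Longrightarrow> q (act g k p) = q p"
  unfolding act_def using q_eq_iff by metis

lemma q_eq_act: "q p = q p' \<longleftrightarrow> (\<exists>g\<in>Lambda. \<exists>k<3. p' = act g k p)"
  unfolding act_def by (rule q_eq_iff)

lemma cont_rho_pow: "continuous_on S (rho ^^ k)"
proof (induction k)
  case (Suc k)
  have "continuous_on S (rho \<circ> (rho ^^ k))"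
    by (rule continuous_on_compose[OF Suc]) (rule cont_rho)
  then show ?case by simp
qed (simp add: continuous_on_id)

lemma cont_act: "continuous_on S (act g k)"
proof -
  have "continuous_on S (mul g \<circ> (rho ^^ k))"
    by (rule continuous_on_compose[OF cont_rho_pow]) (rule cont_mul)
  then show ?thesis unfolding act_def comp_def by simp
qed

lemma rho_pow_aff: "(rho ^^ k) (p + s *\<^sub>R (p' - p)) = (rho ^^ k) p + s *\<^sub>R ((rho ^^ k) p' - (rho ^^ k) p)"
  by (induction k) (simp_all add: rho_aff)

lemma act_aff: "act g k (p + s *\<^sub>R (p' - p)) = act g k p + s *\<^sub>R (act g k p' - act g k p)"
  unfolding act_def rho_pow_aff mul_aff ..

definition Aff :: "(pt \<Rightarrow> pt) set" where
  "Aff = {h. (\<forall>p. q (h p) = q p) \<and> (\<forall>p p' s. h (p + s *\<^sub>R (p' - p)) = h p + s *\<^sub>R (h p' - h p))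
            \<and> continuous_on UNIV h}"

lemma Aff_id: "id \<in> Aff"
  unfolding Aff_def by (simp add: continuous_on_id)

lemma Aff_comp: assumes "h \<in> Aff" "h' \<in> Aff" shows "h \<circ> h' \<in> Aff"
proof -
  have h: "\<forall>p. q (h p) = q p" "\<forall>p p' s. h (p + s *\<^sub>R (p' - p)) = h p + s *\<^sub>R (h p' - h p)"
    "continuous_on UNIV h" using assms(1) unfolding Aff_def by blast+
  have h': "\<forall>p. q (h' p) = q p" "\<forall>p p' s. h' (p + s *\<^sub>R (p' - p)) = h' p + s *\<^sub>R (h' p' - h' p)"
    "continuous_on UNIV h'" using assms(2) unfolding Aff_def by blast+
  have "continuous_on UNIV (h \<circ> h')"
    using continuous_on_compose[OF h'(3) continuous_on_subset[OF h(3)]] by simp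
  moreover have "\<forall>p. q ((h \<circ> h') p) = q p" using h(1) h'(1) by (metis comp_apply)
  moreover have "(h \<circ> h') (p + s *\<^sub>R (p' - p)) = (h \<circ> h') p + s *\<^sub>R ((h \<circ> h') p' - (h \<circ> h') p)" for p p' s
    using h'(2)[rule_format, of p s p'] h(2)[rule_format, of "h' p" s "h' p'"] by (simp only: comp_apply)
  ultimately show ?thesis unfolding Aff_def by blast
qed

lemma act_Aff: "g \<in> Lambda \<Longrightarrow> k < 3 \<Longrightarrow> act g k \<in> Aff"
  unfolding Aff_def using q_act act_aff cont_act by blast

lemma Aff_exists: "q a = q b \<Longrightarrow> \<exists>h\<in>Aff. h a = b"
  unfolding q_eq_act using act_Aff by metis

lemma Aff_q: "h \<in> Aff \<Longrightarrow> q (h p) = q p"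
  unfolding Aff_def by blast

lemma Aff_aff: "h \<in> Aff \<Longrightarrow> h (p + s *\<^sub>R (p' - p)) = h p + s *\<^sub>R (h p' - h p)"
  unfolding Aff_def by blast

lemma Aff_cont: "h \<in> Aff \<Longrightarrow> continuous_on S h"
  unfolding Aff_def using continuous_on_subset by blast

lemma q_cont: "continuous_map euclidean Mhat_top q"
  unfolding continuous_map_def topspace_Mhat openin_Mhat by (auto simp: vimage_def)

lemma q_open: assumes "open V" shows "openin Mhat_top (q ` V)"
proof -
  have "q -` (q ` V) = (\<Union>g\<in>Lambda. \<Union>k\<in>{..<3}. act g k -` V)"
  proof
    show "q -` q ` V \<subseteq> (\<Union>g\<in>Lambda. \<Union>k\<in>{..<3}. act g k -` V)"
    proof
      fix x assume "x \<in> q -` q ` V"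
      then obtain v where v: "v \<in> V" "q x = q v" by auto
      then obtain g k where "g \<in> Lambda" "k < 3" "v = act g k x" unfolding q_eq_act by blast
      then show "x \<in> (\<Union>g\<in>Lambda. \<Union>k\<in>{..<3}. act g k -` V)" using v by auto
    qed
    show "(\<Union>g\<in>Lambda. \<Union>k\<in>{..<3}. act g k -` V) \<subseteq> q -` q ` V"
    proof
      fix x assume "x \<in> (\<Union>g\<in>Lambda. \<Union>k\<in>{..<3}. act g k -` V)"
      then obtain g k where "g \<in> Lambda" "k < 3" "act g k x \<in> V" by auto
      then show "x \<in> q -` q ` V" using q_act by (metis image_eqI vimageI)
    qed
  qed
  moreover have "open (act g k -` V)" for g k
    using continuous_open_preimage[OF cont_act[of UNIV g k] open_UNIV assms] by simp
  ultimately have "open (q -` (q ` V))" by (auto intro!: open_UN)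
  then show ?thesis unfolding openin_Mhat by auto
qed

lemma Mhat_path_connected: "path_connected_space Mhat_top"
proof -
  have "path_connectedin Mhat_top (q ` UNIV)"
    by (rule path_connectedin_continuous_map_image[OF q_cont]) simp
  then show ?thesis unfolding topspace_Mhat[symmetric] path_connectedin_topspace .
qed


definition close :: "pt \<Rightarrow> pt \<Rightarrow> real \<Rightarrow> bool" where
  "close x y d \<longleftrightarrow> \<bar>P1 x - P1 y\<bar> < d \<and> \<bar>P2 x - P2 y\<bar> < d \<and> \<bar>P3 x - P3 y\<bar> < d \<and> \<bar>P4 x - P4 y\<bar> < d
     \<and> \<bar>P5 x - P5 y\<bar> < d \<and> \<bar>P6 x - P6 y\<bar> < d \<and> \<bar>P7 x - P7 y\<bar> < d \<and> \<bar>P8 x - P8 y\<bar> < d"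

lemma close_sym: "close x y d \<Longrightarrow> close y x d"
  unfolding close_def by (simp add: abs_minus_commute)

lemma tri1: "\<bar>a - b\<bar> < d \<Longrightarrow> \<bar>b - c\<bar> < e \<Longrightarrow> \<bar>a - c\<bar> < d + e" for a b c d e :: real
  by linarith

lemma close_tri: "close x y d \<Longrightarrow> close y z e \<Longrightarrow> close x z (d + e)"
  unfolding close_def by (elim conjE) (intro conjI; rule tri1; assumption)

lemma close_mono: "close x y d \<Longrightarrow> d \<le> e \<Longrightarrow> close x y e"
  unfolding close_def by (elim conjE) (intro conjI; rule less_le_trans; assumption)

lemma dist_close: "dist x y < d \<Longrightarrow> close x y d"
  unfolding close_def by (intro conjI; rule le_less_trans[OF P_dist(1)] le_less_trans[OF P_dist(2)]
    le_less_trans[OF P_dist(3)] le_less_trans[OF P_dist(4)] le_less_trans[OF P_dist(5)]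
    le_less_trans[OF P_dist(6)] le_less_trans[OF P_dist(7)] le_less_trans[OF P_dist(8)]; assumption)

lemma neq_not_close: assumes "x \<noteq> y" shows "\<exists>d>0. \<not> close x y d"
proof -
  have "P1 x \<noteq> P1 y \<or> P2 x \<noteq> P2 y \<or> P3 x \<noteq> P3 y \<or> P4 x \<noteq> P4 y \<or> P5 x \<noteq> P5 y \<or> P6 x \<noteq> P6 y
     \<or> P7 x \<noteq> P7 y \<or> P8 x \<noteq> P8 y" using assms pt_eq_iff by blast
  then show ?thesis
  proof (elim disjE)
    assume "P1 x \<noteq> P1 y" then show ?thesis unfolding close_def by (intro exI[of _ "\<bar>P1 x - P1 y\<bar>"]) auto
  next
    assume "P2 x \<noteq> P2 y" then show ?thesis unfolding close_def by (intro exI[of _ "\<bar>P2 x - P2 y\<bar>"]) auto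
  next
    assume "P3 x \<noteq> P3 y" then show ?thesis unfolding close_def by (intro exI[of _ "\<bar>P3 x - P3 y\<bar>"]) auto
  next
    assume "P4 x \<noteq> P4 y" then show ?thesis unfolding close_def by (intro exI[of _ "\<bar>P4 x - P4 y\<bar>"]) auto
  next
    assume "P5 x \<noteq> P5 y" then show ?thesis unfolding close_def by (intro exI[of _ "\<bar>P5 x - P5 y\<bar>"]) auto
  next
    assume "P6 x \<noteq> P6 y" then show ?thesis unfolding close_def by (intro exI[of _ "\<bar>P6 x - P6 y\<bar>"]) auto
  next
    assume "P7 x \<noteq> P7 y" then show ?thesis unfolding close_def by (intro exI[of _ "\<bar>P7 x - P7 y\<bar>"]) auto
  next
    assume "P8 x \<noteq> P8 y" then show ?thesis unfolding close_def by (intro exI[of _ "\<bar>P8 x - P8 y\<bar>"]) auto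
  qed
qed

lemma Lambda_Ints: assumes "g \<in> Lambda"
  shows "P1 g \<in> \<int>" "P2 g \<in> \<int>" "P3 g \<in> \<int>" "P4 g \<in> \<int>" "P5 g \<in> \<int>" "P6 g \<in> \<int>" "P7 g \<in> \<int>" "P8 g \<in> \<int>"
proof -
  obtain x1 x2 y1 y2 z1 z2 v1 v2 :: int where g: "g = (of_int x1, of_int x2, of_int y1, of_int y2,
     of_int z1, of_int z2, of_int v1, of_int v2)"
    using assms by (cases g rule: pt_cases) (auto simp: Lambda_iff)
  show "P1 g \<in> \<int>" "P2 g \<in> \<int>" "P3 g \<in> \<int>" "P4 g \<in> \<int>" "P5 g \<in> \<int>" "P6 g \<in> \<int>" "P7 g \<in> \<int>" "P8 g \<in> \<int>"
    unfolding g by simp_all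
qed

lemma ints_close_eq: "a \<in> \<int> \<Longrightarrow> b \<in> \<int> \<Longrightarrow> \<bar>(c + a) - (c + b)\<bar> < 1 \<Longrightarrow> a = b" for a b c :: real
  using Ints_eq_abs_less1[of a b] by simp

lemma close_sep: assumes "g \<in> Lambda" "g' \<in> Lambda" "close (mul g r) (mul g' r) 1"
  shows "mul g r = mul g' r"
proof -
  note I = Lambda_Ints[OF assms(1)] Lambda_Ints[OF assms(2)]
  note c = assms(3)[unfolded close_def mul_P P_simps]
  have e1: "P1 g = P1 g'" using c I by (intro ints_close_eq[of _ _ "P1 r"]) (simp_all add: add.commute)
  have e2: "P2 g = P2 g'" using c I by (intro ints_close_eq[of _ _ "P2 r"]) (simp_all add: add.commute)
  have e3: "P3 g = P3 g'" using c I by (intro ints_close_eq[of _ _ "P3 r"]) (simp_all add: add.commute)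
  have e4: "P4 g = P4 g'" using c I by (intro ints_close_eq[of _ _ "P4 r"]) (simp_all add: add.commute)
  have e5: "P5 g = P5 g'" using c I by (intro ints_close_eq[of _ _ "P5 r"]) (simp_all add: add.commute)
  have e6: "P6 g = P6 g'" using c I by (intro ints_close_eq[of _ _ "P6 r"]) (simp_all add: add.commute)
  have e7: "P7 g = P7 g'"
    using c I e3 e4 by (intro ints_close_eq[of _ _ "P7 r + (P3 g - P4 g) * P5 r - (P3 g + 2 * P4 g) * P6 r"])
      (simp_all add: algebra_simps)
  have e8: "P8 g = P8 g'"
    using c I e3 e4 by (intro ints_close_eq[of _ _ "P8 r - (2 * P3 g + P4 g) * P5 r + (P4 g - P3 g) * P6 r"])
      (simp_all add: algebra_simps)
  show ?thesis unfolding mul_P using e1 e2 e3 e4 e5 e6 e7 e8 by simp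
qed

lemma r1: "\<bar>a1 - b1\<bar> < e \<Longrightarrow> \<bar>a2 - b2\<bar> < e \<Longrightarrow> \<bar>(- a1 - a2) - (- b1 - b2)\<bar> < 2 * e" for a1 a2 b1 b2 e :: real
  by linarith

lemma r2: "\<bar>a1 - b1\<bar> < e \<Longrightarrow> \<bar>a1 - b1\<bar> < 2 * e" for a1 b1 e :: real
  by linarith

lemma close_rho: assumes "close a b e" shows "close (rho a) (rho b) (2 * e)"
proof -
  have c: "\<bar>P1 a - P1 b\<bar> < e" "\<bar>P2 a - P2 b\<bar> < e" "\<bar>P3 a - P3 b\<bar> < e" "\<bar>P4 a - P4 b\<bar> < e"
     "\<bar>P5 a - P5 b\<bar> < e" "\<bar>P6 a - P6 b\<bar> < e" "\<bar>P7 a - P7 b\<bar> < e" "\<bar>P8 a - P8 b\<bar> < e"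
    using assms unfolding close_def by auto
  show ?thesis unfolding close_def rho_P P_simps
    using r1[OF c(1) c(2)] r1[OF c(3) c(4)] r1[OF c(5) c(6)] r1[OF c(7) c(8)]
      r2[OF c(1)] r2[OF c(3)] r2[OF c(5)] r2[OF c(7)] by simp
qed

lemma close_rhok: assumes "close a b e" "k < 3"
  shows "close ((rho ^^ k) a) ((rho ^^ k) b) (4 * e)"
proof -
  have e: "e > 0" using assms(1) unfolding close_def by linarith
  have "k = 0 \<or> k = 1 \<or> k = 2" using assms(2) by linarith
  then show ?thesis
  proof (elim disjE)
    assume "k = 0" then show ?thesis using close_mono[OF assms(1)] e by simp
  next
    assume "k = 1" then show ?thesis using close_mono[OF close_rho[OF assms(1)]] e by simp
  next
    assume "k = 2" then show ?thesis using close_rho[OF close_rho[OF assms(1)]]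
      by (simp add: numeral_2_eq_2)
  qed
qed

lemma iso: "\<exists>\<delta>>0. \<forall>g\<in>Lambda. close (act g k f) f \<delta> \<longrightarrow> act g k f = f"
proof (cases "\<exists>g0\<in>Lambda. close (act g0 k f) f (1/2) \<and> act g0 k f \<noteq> f")
  case True
  then obtain g0 where g0: "g0 \<in> Lambda" "close (act g0 k f) f (1/2)" "act g0 k f \<noteq> f" by blast
  obtain d where d: "d > 0" "\<not> close (act g0 k f) f d" using neq_not_close[OF g0(3)] by blast
  show ?thesis
  proof (intro exI[of _ "min (1/2) d"] conjI ballI impI)
    show "0 < min (1/2) d" using d by simp
    fix g assume g: "g \<in> Lambda" "close (act g k f) f (min (1/2) d)"
    have "close (act g k f) f (1/2)" using close_mono[OF g(2), of "1/2"] by simp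
    from close_tri[OF this close_sym[OF g0(2)]]
    have "close (act g k f) (act g0 k f) 1" by simp
    then have "act g k f = act g0 k f" unfolding act_def using close_sep g(1) g0(1) by simp
    then have "close (act g0 k f) f d" using close_mono[OF g(2)] by simp
    then show "act g k f = f" using d by blast
  qed
next
  case False
  show ?thesis
    by (rule exI[of _ "1/2"]) (use False in auto)
qed

lemma lin_bound:
  fixes w x y a b c M1 M2 :: real
  assumes "\<bar>w\<bar> < c" "\<bar>x\<bar> < c" "\<bar>y\<bar> < c" "\<bar>a\<bar> \<le> M1" "\<bar>b\<bar> \<le> M2"
  shows "\<bar>w + a * x + b * y\<bar> < c + M1 * c + M2 * c"
proof -
  have "\<bar>a * x\<bar> \<le> M1 * c" unfolding abs_mult
    using assms by (intro mult_mono) auto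
  moreover have "\<bar>b * y\<bar> \<le> M2 * c" unfolding abs_mult
    using assms by (intro mult_mono) auto
  ultimately show ?thesis using assms(1) by (smt (verit) abs_triangle_ineq)
qed

definition Abd :: "pt \<Rightarrow> nat \<Rightarrow> real" where
  "Abd f k = \<bar>P3 f\<bar> + \<bar>P4 f\<bar> + \<bar>P3 ((rho ^^ k) f)\<bar> + \<bar>P4 ((rho ^^ k) f)\<bar> + 5"

lemma est:
  assumes g: "g \<in> Lambda" and k: "k < 3" and e: "0 < e" "e \<le> 1"
    and p: "dist p f < e" and tp: "dist (act g k p) f < e"
  shows "close (act g k f) f (e * (5 + 20 * Abd f k))"
proof -
  define r where "r = (rho ^^ k) f"
  define r' where "r' = (rho ^^ k) p"
  define A where "A = Abd f k"
  have A0: "A \<ge> 0" unfolding A_def Abd_def by simp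
  have cfp: "close f p e" using close_sym[OF dist_close[OF p]] .
  have crr: "close r r' (4 * e)" unfolding r_def r'_def by (rule close_rhok[OF cfp k])
  have ctp: "close (mul g r') f e" using dist_close[OF tp] unfolding act_def r'_def .
  have x3: "\<bar>P3 r - P3 r'\<bar> < 4 * e" "\<bar>P4 r - P4 r'\<bar> < 4 * e" using crr unfolding close_def by auto
  have y3: "\<bar>P3 r' + P3 g - P3 f\<bar> < e" "\<bar>P4 r' + P4 g - P4 f\<bar> < e"
    using ctp unfolding close_def mul_P P_simps by auto
  have b3: "\<bar>P3 g\<bar> \<le> A"
  proof -
    have "\<bar>P3 g\<bar> \<le> \<bar>P3 r' + P3 g - P3 f\<bar> + \<bar>P3 f\<bar> + \<bar>P3 r\<bar> + \<bar>P3 r - P3 r'\<bar>" by linarith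
    then show ?thesis using x3(1) y3(1) e unfolding A_def Abd_def r_def[symmetric] by linarith
  qed
  have b4: "\<bar>P4 g\<bar> \<le> A"
  proof -
    have "\<bar>P4 g\<bar> \<le> \<bar>P4 r' + P4 g - P4 f\<bar> + \<bar>P4 f\<bar> + \<bar>P4 r\<bar> + \<bar>P4 r - P4 r'\<bar>" by linarith
    then show ?thesis using x3(2) y3(2) e unfolding A_def Abd_def r_def[symmetric] by linarith
  qed
  have c: "\<bar>P1 r - P1 r'\<bar> < 4 * e" "\<bar>P2 r - P2 r'\<bar> < 4 * e" "\<bar>P3 r - P3 r'\<bar> < 4 * e" "\<bar>P4 r - P4 r'\<bar> < 4 * e"
     "\<bar>P5 r - P5 r'\<bar> < 4 * e" "\<bar>P6 r - P6 r'\<bar> < 4 * e" "\<bar>P7 r - P7 r'\<bar> < 4 * e" "\<bar>P8 r - P8 r'\<bar> < 4 * e"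
    using crr unfolding close_def by auto
  have ba1: "\<bar>P3 g - P4 g\<bar> \<le> 2 * A" using b3 b4 by linarith
  have ba2: "\<bar>- (P3 g + 2 * P4 g)\<bar> \<le> 3 * A" using b3 b4 by linarith
  have ba3: "\<bar>- (2 * P3 g + P4 g)\<bar> \<le> 3 * A" using b3 b4 by linarith
  have ba4: "\<bar>P4 g - P3 g\<bar> \<le> 2 * A" using b3 b4 by linarith
  have l7: "\<bar>(P7 r - P7 r') + (P3 g - P4 g) * (P5 r - P5 r') + (- (P3 g + 2 * P4 g)) * (P6 r - P6 r')\<bar>
      < 4 * e + 2 * A * (4 * e) + 3 * A * (4 * e)"
    by (rule lin_bound[OF c(7) c(5) c(6) ba1 ba2])
  have l8: "\<bar>(P8 r - P8 r') + (- (2 * P3 g + P4 g)) * (P5 r - P5 r') + (P4 g - P3 g) * (P6 r - P6 r')\<bar>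
      < 4 * e + 3 * A * (4 * e) + 2 * A * (4 * e)"
    by (rule lin_bound[OF c(8) c(5) c(6) ba3 ba4])
  have eA: "4 * e \<le> 4 * e + 20 * A * e" using A0 e by simp
  have "close (mul g r) (mul g r') (4 * e + 20 * A * e)"
    unfolding close_def mul_P P_simps
  proof (intro conjI)
    show "\<bar>P7 r + P7 g + (P3 g - P4 g) * P5 r - (P3 g + 2 * P4 g) * P6 r -
        (P7 r' + P7 g + (P3 g - P4 g) * P5 r' - (P3 g + 2 * P4 g) * P6 r')\<bar> < 4 * e + 20 * A * e"
      using l7 by (simp add: algebra_simps)
    show "\<bar>P8 r + P8 g - (2 * P3 g + P4 g) * P5 r + (P4 g - P3 g) * P6 r -
        (P8 r' + P8 g - (2 * P3 g + P4 g) * P5 r' + (P4 g - P3 g) * P6 r')\<bar> < 4 * e + 20 * A * e"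
      using l8 by (simp add: algebra_simps)
  qed (simp_all add: less_le_trans[OF c(1) eA] less_le_trans[OF c(2) eA] less_le_trans[OF c(3) eA]
         less_le_trans[OF c(4) eA] less_le_trans[OF c(5) eA] less_le_trans[OF c(6) eA])
  from close_tri[OF this ctp] have "close (mul g r) f (4 * e + 20 * A * e + e)" .
  then show ?thesis unfolding act_def r_def[symmetric] A_def[symmetric]
    by (rule close_mono) (simp add: algebra_simps)
qed

lemma fix_k: assumes k: "k < 3"
  shows "\<exists>\<epsilon>>0. \<forall>g\<in>Lambda. \<forall>p. dist p f < \<epsilon> \<longrightarrow> dist (act g k p) f < \<epsilon> \<longrightarrow> act g k f = f"
proof -
  obtain \<delta> where d: "\<delta> > 0" "\<forall>g\<in>Lambda. close (act g k f) f \<delta> \<longrightarrow> act g k f = f" using iso by blast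
  define A where "A = Abd f k"
  have A0: "A \<ge> 0" unfolding A_def Abd_def by simp
  define \<epsilon> where "\<epsilon> = min 1 (\<delta> / (5 + 20 * A))"
  have e: "0 < \<epsilon>" "\<epsilon> \<le> 1" unfolding \<epsilon>_def using d A0 by auto
  have "\<epsilon> * (5 + 20 * A) \<le> \<delta>"
  proof -
    have "\<epsilon> \<le> \<delta> / (5 + 20 * A)" unfolding \<epsilon>_def by simp
    then show ?thesis using A0 by (simp add: pos_le_divide_eq)
  qed
  show ?thesis
  proof (intro exI[of _ \<epsilon>] conjI ballI allI impI)
    fix g p assume "g \<in> Lambda" "dist p f < \<epsilon>" "dist (act g k p) f < \<epsilon>"
    from est[OF this(1) k e this(2,3)] have "close (act g k f) f (\<epsilon> * (5 + 20 * A))" unfolding A_def .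
    then have "close (act g k f) f \<delta>" by (rule close_mono) fact
    then show "act g k f = f" using d \<open>g \<in> Lambda\<close> by blast
  qed (rule e(1))
qed

definition chart :: "pt \<Rightarrow> real \<Rightarrow> bool" where
  "chart f e \<longleftrightarrow> e > 0 \<and> (\<forall>p p' s. dist f p < e \<longrightarrow> dist f p' < e \<longrightarrow> q p = q p' \<longrightarrow>
      q (f + s *\<^sub>R (p - f)) = q (f + s *\<^sub>R (p' - f)))"

lemma chart_exists: "\<exists>e. chart f e"
proof -
  obtain e0 where e0: "e0 > 0" "\<forall>g\<in>Lambda. \<forall>p. dist p f < e0 \<longrightarrow> dist (act g 0 p) f < e0 \<longrightarrow> act g 0 f = f"
    using fix_k[of 0 f] by auto
  obtain e1 where e1: "e1 > 0" "\<forall>g\<in>Lambda. \<forall>p. dist p f < e1 \<longrightarrow> dist (act g 1 p) f < e1 \<longrightarrow> act g 1 f = f"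
    using fix_k[of 1 f] by auto
  obtain e2 where e2: "e2 > 0" "\<forall>g\<in>Lambda. \<forall>p. dist p f < e2 \<longrightarrow> dist (act g 2 p) f < e2 \<longrightarrow> act g 2 f = f"
    using fix_k[of 2 f] by auto
  define e where "e = min e0 (min e1 e2)"
  have fx: "act g k f = f" if "g \<in> Lambda" "k < 3" "dist p f < e" "dist (act g k p) f < e" for g k p
  proof -
    have "k = 0 \<or> k = 1 \<or> k = 2" using that(2) by linarith
    moreover have "dist p f < e0" "dist p f < e1" "dist p f < e2" using that(3) unfolding e_def by auto
    moreover have "dist (act g k p) f < e0" "dist (act g k p) f < e1" "dist (act g k p) f < e2"
      using that(4) unfolding e_def by auto
    ultimately show ?thesis using that(1) e0(2) e1(2) e2(2) by blast
  qed
  have "chart f e" unfolding chart_def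
  proof (intro conjI allI impI)
    show "e > 0" unfolding e_def using e0 e1 e2 by simp
    fix p p' s assume p: "dist f p < e" and p': "dist f p' < e" and qq: "q p = q p'"
    obtain g k where gk: "g \<in> Lambda" "k < 3" "p' = act g k p" using qq unfolding q_eq_act by blast
    have ff: "act g k f = f" using fx[OF gk(1,2)] p p' gk(3) by (simp add: dist_commute)
    have "act g k (f + s *\<^sub>R (p - f)) = f + s *\<^sub>R (p' - f)"
      using act_aff[of g k f s p] ff gk(3) by simp
    then show "q (f + s *\<^sub>R (p - f)) = q (f + s *\<^sub>R (p' - f))"
      using q_act[OF gk(1,2)] by metis
  qed
  then show ?thesis by blast
qed


definition Kc :: "pt \<Rightarrow> real \<Rightarrow> pt set set \<Rightarrow> real \<Rightarrow> pt set set" where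
  "Kc f e u s = q (f + (1 - s) *\<^sub>R ((SOME p. p \<in> ball f e \<and> q p = u) - f))"

lemma chart_use: "chart f e \<Longrightarrow> dist f p < e \<Longrightarrow> dist f p' < e \<Longrightarrow> q p = q p' \<Longrightarrow>
   q (f + s *\<^sub>R (p - f)) = q (f + s *\<^sub>R (p' - f))"
  unfolding chart_def by blast

lemma Kc_eq: assumes "chart f e" "p \<in> ball f e"
  shows "Kc f e (q p) s = q (f + (1 - s) *\<^sub>R (p - f))"
proof -
  define p' where "p' = (SOME p'. p' \<in> ball f e \<and> q p' = q p)"
  have "p' \<in> ball f e \<and> q p' = q p" unfolding p'_def by (rule someI[of _ p]) (use assms(2) in simp)
  then show ?thesis unfolding Kc_def p'_def[symmetric] using chart_use[OF assms(1), of p' p "1 - s"] assms(2) by simp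
qed

lemma Kc_0: assumes "chart f e" "u \<in> q ` ball f e" shows "Kc f e u 0 = u"
proof -
  obtain p where p: "p \<in> ball f e" "u = q p" using assms(2) by blast
  have "f + (1 - 0) *\<^sub>R (p - f) = p" by simp
  then show ?thesis using Kc_eq[OF assms(1) p(1), of 0] p(2) by simp
qed

lemma Kc_cont: assumes ch: "chart f e"
  shows "continuous_map (prod_topology (subtopology Mhat_top (q ` ball f e)) euclideanreal) Mhat_top
           (\<lambda>(u, s). Kc f e u s)"
  unfolding continuous_map_def
proof (intro conjI allI impI)
  show "(\<lambda>(u, s). Kc f e u s) \<in> topspace (prod_topology (subtopology Mhat_top (q ` ball f e)) euclideanreal) \<rightarrow> topspace Mhat_top"
    unfolding topspace_Mhat Kc_def by auto
  fix W assume W: "openin Mhat_top W"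
  let ?X = "prod_topology (subtopology Mhat_top (q ` ball f e)) euclideanreal"
  let ?S = "{x \<in> topspace ?X. (\<lambda>(u, s). Kc f e u s) x \<in> W}"
  have tX: "topspace ?X = q ` ball f e \<times> UNIV" unfolding topspace_prod_topology topspace_subtopology topspace_Mhat by auto
  define G where "G = (\<lambda>(x::pt \<times> real). f + (1 - snd x) *\<^sub>R (fst x - f))"
  have Gc: "continuous_on UNIV G" unfolding G_def by (intro continuous_intros)
  have oW: "open (q -` W)" using W unfolding openin_Mhat by blast
  define Ob where "Ob = G -` (q -` W) \<inter> (ball f e \<times> UNIV)"
  have oO: "open Ob" unfolding Ob_def
    by (intro open_Int open_Times open_ball open_UNIV) (use continuous_open_preimage[OF Gc open_UNIV oW] in simp)
  show "openin ?X ?S"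
  proof (subst openin_subopen, intro ballI)
    fix x assume x: "x \<in> ?S"
    then obtain u s where us: "x = (u, s)" "u \<in> q ` ball f e" "Kc f e u s \<in> W" using tX by auto
    then obtain p0 where p0: "p0 \<in> ball f e" "u = q p0" by auto
    have "(p0, s) \<in> Ob" unfolding Ob_def G_def using us p0 Kc_eq[OF ch p0(1)] by simp
    then obtain V1 V2 where V: "open V1" "open V2" "(p0, s) \<in> V1 \<times> V2" "V1 \<times> V2 \<subseteq> Ob"
      using open_prod_elim[OF oO] by metis
    have V1B: "V1 \<subseteq> ball f e" using V(3,4) unfolding Ob_def by auto
    have "openin (subtopology Mhat_top (q ` ball f e)) (q ` V1)"
      unfolding openin_subtopology using q_open[OF V(1)] V1B by blast
    then have T: "openin ?X (q ` V1 \<times> V2)" unfolding openin_prod_Times_iff using V(2) by auto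
    have "q ` V1 \<times> V2 \<subseteq> ?S"
    proof
      fix y assume "y \<in> q ` V1 \<times> V2"
      then obtain v t where vt: "y = (q v, t)" "v \<in> V1" "t \<in> V2" by auto
      then have "(v, t) \<in> Ob" using V(4) by auto
      then have "Kc f e (q v) t \<in> W" unfolding Ob_def G_def using Kc_eq[OF ch] V1B vt(2) by auto
      then show "y \<in> ?S" using vt V1B tX by auto
    qed
    then show "\<exists>T. openin ?X T \<and> x \<in> T \<and> T \<subseteq> ?S" using T V(3) us p0 by blast
  qed
qed

lemma cmap_sq: fixes g :: "real \<times> real \<Rightarrow> 'a::topological_space"
  assumes "continuous_on ({0..1} \<times> {0..1}) g" "g ` ({0..1} \<times> {0..1}) \<subseteq> S"
  shows "continuous_map (prod_topology (top_of_set {0..1}) (top_of_set {0..1})) (top_of_set S) g"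
proof -
  have "prod_topology (top_of_set {0..1}) (top_of_set {0..1}) = top_of_set ({0..1::real} \<times> {0..1::real})"
    using subtopology_Times[of euclidean euclidean "{0..1::real}" "{0..1::real}"] by simp
  then show ?thesis using assms by (simp add: continuous_map_in_subtopology image_subset_iff Pi_iff)
qed

definition sig :: "real \<Rightarrow> real \<Rightarrow> real" where "sig s t = max 0 (min 1 (t + s * (3 * t - 2)))"
definition psi :: "real \<Rightarrow> real" where "psi t = min 1 (min (2 * t) (4 - 4 * t))"
definition dl :: "pt \<Rightarrow> pt \<Rightarrow> pt \<Rightarrow> real \<Rightarrow> pt" where
  "dl a f b = linepath a f +++ (linepath f f +++ linepath f b)"

lemma seg_hom:
  assumes ch: "chart f e" and c: "continuous_map (top_of_set {0..1}) Mhat_top c"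
    and cU: "\<forall>t\<in>{0..1}. c t \<in> q ` ball f e" and a: "a \<in> ball f e" and b: "b \<in> ball f e"
    and ca: "q a = c 0" and cb: "q b = c 1"
  shows "\<exists>H :: real \<times> real \<Rightarrow> pt set set. continuous_map (prod_topology (top_of_set {0..1}) (top_of_set {0..1})) Mhat_top H \<and>
    (\<forall>t\<in>{0..1}. H (0, t) = c t) \<and> (\<forall>t\<in>{0..1}. H (1, t) = q (dl a f b t)) \<and>
    (\<forall>s\<in>{0..1}. H (s, 0) = c 0 \<and> H (s, 1) = c 1)"
proof -
  define H where "H = (\<lambda>(s, t). Kc f e (c (sig s t)) (s * psi t))"
  have sig01: "sig s t \<in> {0..1}" for s t unfolding sig_def by auto
  have m1: "continuous_map (prod_topology (top_of_set {0..1}) (top_of_set {0..1})) (top_of_set {0..1}) (\<lambda>(s, t). sig s t)"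
    by (rule cmap_sq) (auto simp: sig_def case_prod_unfold intro!: continuous_intros)
  have m2: "continuous_map (prod_topology (top_of_set {0..1}) (top_of_set {0..1})) euclideanreal (\<lambda>(s, t). s * psi t)"
  proof -
    have "continuous_map (prod_topology (top_of_set {0..1}) (top_of_set {0..1})) (top_of_set UNIV) (\<lambda>(s, t). s * psi t)"
      by (rule cmap_sq) (auto simp: psi_def case_prod_unfold intro!: continuous_intros)
    then show ?thesis by simp
  qed
  have m3: "continuous_map (prod_topology (top_of_set {0..1}) (top_of_set {0..1})) (subtopology Mhat_top (q ` ball f e)) (\<lambda>(s, t). c (sig s t))"
  proof (rule continuous_map_into_subtopology)
    show "continuous_map (prod_topology (top_of_set {0..1}) (top_of_set {0..1})) Mhat_top (\<lambda>(s, t). c (sig s t))"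
      using continuous_map_compose[OF m1 c] by (simp add: o_def case_prod_unfold)
    show "(\<lambda>(s, t). c (sig s t)) \<in> topspace (prod_topology (top_of_set {0..1}) (top_of_set {0..1})) \<rightarrow> q ` ball f e"
      using cU sig01 by auto
  qed
  have Hc: "continuous_map (prod_topology (top_of_set {0..1}) (top_of_set {0..1})) Mhat_top H"
  proof -
    have "continuous_map (prod_topology (top_of_set {0..1}) (top_of_set {0..1}))
       (prod_topology (subtopology Mhat_top (q ` ball f e)) euclideanreal) (\<lambda>x. ((\<lambda>(s, t). c (sig s t)) x, (\<lambda>(s, t). s * psi t) x))"
      by (rule continuous_map_pairedI[OF m3 m2])
    from continuous_map_compose[OF this Kc_cont[OF ch]] show ?thesis
      unfolding H_def by (simp add: o_def case_prod_unfold)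
  qed
  have H0: "H (0, t) = c t" if "t \<in> {0..1}" for t
  proof -
    have "sig 0 t = t" using that unfolding sig_def by auto
    then show ?thesis unfolding H_def using Kc_0[OF ch] cU that by simp
  qed
  have Hs0: "H (s, 0) = c 0" if "s \<in> {0..1}" for s
  proof -
    have "sig s 0 = 0" using that unfolding sig_def by auto
    moreover have "psi 0 = 0" unfolding psi_def by simp
    ultimately show ?thesis unfolding H_def using Kc_0[OF ch] cU by simp
  qed
  have Hs1: "H (s, 1) = c 1" if "s \<in> {0..1}" for s
  proof -
    have "sig s 1 = 1" using that unfolding sig_def by auto
    moreover have "psi 1 = 0" unfolding psi_def by simp
    ultimately show ?thesis unfolding H_def using Kc_0[OF ch] cU by simp
  qed
  have H1: "H (1, t) = q (dl a f b t)" if t: "t \<in> {0..1}" for t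
  proof -
    consider "t \<le> 1/2" | "1/2 < t" "t \<le> 3/4" | "3/4 < t" by linarith
    then show ?thesis
    proof cases
      case 1
      then have "sig 1 t = 0" "psi t = 2 * t" using t unfolding sig_def psi_def by auto
      then have "H (1, t) = q (f + (1 - 2 * t) *\<^sub>R (a - f))" unfolding H_def using ca[symmetric] Kc_eq[OF ch a] by simp
      also have "f + (1 - 2 * t) *\<^sub>R (a - f) = dl a f b t"
        unfolding dl_def joinpaths_def linepath_def using 1 by (simp add: algebra_simps)
      finally show ?thesis .
    next
      case 2
      then have s: "psi t = 1" using t unfolding psi_def by auto
      have "c (sig 1 t) \<in> q ` ball f e" using cU sig01 by auto
      then obtain p where p: "p \<in> ball f e" "c (sig 1 t) = q p" by auto
      have "H (1, t) = q f" unfolding H_def using p s Kc_eq[OF ch p(1)] by simp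
      also have "f = dl a f b t"
        unfolding dl_def joinpaths_def linepath_refl using 2 by simp
      finally show ?thesis .
    next
      case 3
      then have "sig 1 t = 1" "psi t = 4 - 4 * t" using t unfolding sig_def psi_def by auto
      then have "H (1, t) = q (f + (1 - (4 - 4 * t)) *\<^sub>R (b - f))" unfolding H_def using cb[symmetric] Kc_eq[OF ch b] by simp
      also have "f + (1 - (4 - 4 * t)) *\<^sub>R (b - f) = dl a f b t"
      proof -
        have "dl a f b t = linepath f b (4 * t - 3)" unfolding dl_def joinpaths_def using 3 by (simp add: algebra_simps)
        moreover have "linepath f b x = f + x *\<^sub>R (b - f)" for x unfolding linepath_def by (simp add: algebra_simps)
        moreover have "1 - (4 - 4 * t) = 4 * t - 3" by simp
        ultimately show ?thesis by simp
      qed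
      finally show ?thesis .
    qed
  qed
  have "continuous_map (prod_topology (top_of_set {0..1}) (top_of_set {0..1})) Mhat_top H \<and>
    (\<forall>t\<in>{0..1}. H (0, t) = c t) \<and> (\<forall>t\<in>{0..1}. H (1, t) = q (dl a f b t)) \<and>
    (\<forall>s\<in>{0..1}. H (s, 0) = c 0 \<and> H (s, 1) = c 1)"
    using Hc H0 H1 Hs0 Hs1 by simp
  then show ?thesis by blast
qed


lemma mk_hom:
  fixes H :: "real \<times> real \<Rightarrow> 'b"
  assumes Hc: "continuous_map (prod_topology (top_of_set {0..1}) (top_of_set {0..1})) Y H"
    and H0: "\<forall>t\<in>{0..1}. H (0, t) = f t" and H1: "\<forall>t\<in>{0..1}. H (1, t) = g t"
    and Hz: "\<forall>s\<in>{0..1}. H (s, 0) = z \<and> H (s, 1) = z"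
  shows "homotopic_with (\<lambda>h. h 0 = z \<and> h 1 = z) (top_of_set {0..1}) Y f g"
proof -
  define h where "h = (\<lambda>x::real \<times> real. if snd x \<in> {0..1} then H x else if fst x = 0 then f (snd x) else g (snd x))"
  have hc: "continuous_map (prod_topology (top_of_set {0..1}) (top_of_set {0..1})) Y h"
    by (rule continuous_map_eq[OF Hc]) (auto simp: h_def)
  have "\<forall>x. h (0, x) = f x" unfolding h_def using H0 by simp
  moreover have "\<forall>x. h (1, x) = g x" unfolding h_def using H1 by simp
  moreover have "\<forall>t\<in>{0..1}. (\<lambda>x. h (t, x)) 0 = z \<and> (\<lambda>x. h (t, x)) 1 = z" unfolding h_def using Hz by simp
  ultimately show ?thesis unfolding homotopic_with_def using hc by blast
qed

lemma lp_eq: "linepath a b s = a + s *\<^sub>R (b - a)"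
  unfolding linepath_def by (simp add: algebra_simps)

lemma lp_rev: "linepath b a s = linepath a b (1 - s)"
  unfolding linepath_def by (simp add: algebra_simps)

lemma Aff_lp: "T \<in> Aff \<Longrightarrow> T a = a \<Longrightarrow> q (linepath a (T x) s) = q (linepath a x s)"
  unfolding lp_eq using Aff_aff[of T a s x] Aff_q[of T] by metis

lemma fix1: "\<exists>a. act g 1 a = a"
proof -
  obtain g1 g2 g3 g4 g5 g6 g7 g8 where g: "g = (g1, g2, g3, g4, g5, g6, g7, g8)" by (rule pt_cases)
  define a1 where "a1 = (g1 - g2) / 3"
  define a2 where "a2 = (g1 + 2 * g2) / 3"
  define a3 where "a3 = (g3 - g4) / 3"
  define a4 where "a4 = (g3 + 2 * g4) / 3"
  define a5 where "a5 = (g5 - g6) / 3"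
  define a6 where "a6 = (g5 + 2 * g6) / 3"
  define c7 where "c7 = g7 + (g3 - g4) * (- a5 - a6) - (g3 + 2 * g4) * a5"
  define c8 where "c8 = g8 - (2 * g3 + g4) * (- a5 - a6) + (g4 - g3) * a5"
  define a7 where "a7 = (c7 - c8) / 3"
  define a8 where "a8 = (c7 + 2 * c8) / 3"
  have "act g 1 (a1, a2, a3, a4, a5, a6, a7, a8) = (a1, a2, a3, a4, a5, a6, a7, a8)"
    unfolding act_def g
    by (simp add: a1_def a2_def a3_def a4_def a5_def a6_def a7_def a8_def c7_def c8_def field_simps)
  then show ?thesis by blast
qed

lemma fix2: "\<exists>a. act g 2 a = a"
proof -
  obtain g1 g2 g3 g4 g5 g6 g7 g8 where g: "g = (g1, g2, g3, g4, g5, g6, g7, g8)" by (rule pt_cases)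
  define a1 where "a1 = (g2 + 2 * g1) / 3"
  define a2 where "a2 = (g2 - g1) / 3"
  define a3 where "a3 = (g4 + 2 * g3) / 3"
  define a4 where "a4 = (g4 - g3) / 3"
  define a5 where "a5 = (g6 + 2 * g5) / 3"
  define a6 where "a6 = (g6 - g5) / 3"
  define c7 where "c7 = g7 + (g3 - g4) * a6 - (g3 + 2 * g4) * (- a5 - a6)"
  define c8 where "c8 = g8 - (2 * g3 + g4) * a6 + (g4 - g3) * (- a5 - a6)"
  define a7 where "a7 = (c8 + 2 * c7) / 3"
  define a8 where "a8 = (c8 - c7) / 3"
  have "act g 2 (a1, a2, a3, a4, a5, a6, a7, a8) = (a1, a2, a3, a4, a5, a6, a7, a8)"
    unfolding act_def g numeral_2_eq_2
    by (simp add: a1_def a2_def a3_def a4_def a5_def a6_def a7_def a8_def c7_def c8_def field_simps)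
  then show ?thesis by blast
qed

lemma fold_data:
  assumes "q p3 = q p"
  shows "\<exists>b p2 a. (\<forall>s. q (linepath b p2 s) = q (linepath b p s)) \<and>
     (\<forall>s. q (linepath a p3 s) = q (linepath a p2 s)) \<and> q p2 = q p"
proof -
  obtain g k where gk: "g \<in> Lambda" "k < 3" "p3 = act g k p" using assms[symmetric] unfolding q_eq_act by blast
  have "k = 0 \<or> k = 1 \<or> k = 2" using gk(2) by linarith
  then show ?thesis
  proof (elim disjE)
    assume k: "k = 0"
    obtain a where a: "act g 1 a = a" using fix1 by blast
    have r0: "act 0 2 0 = 0" unfolding act_def numeral_2_eq_2 by (simp add: zero_prod_def)
    have T2: "act 0 2 \<in> Aff" using act_Aff zero_Lambda by simp
    have T1: "act g 1 \<in> Aff" using act_Aff gk(1) by simp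
    have "act g 1 (act 0 2 p) = p3" unfolding gk(3) k act_def
      using rho3 mul_zero by (simp add: numeral_2_eq_2)
    moreover have "\<forall>s. q (linepath 0 (act 0 2 p) s) = q (linepath 0 p s)"
      using Aff_lp[OF T2] r0 by metis
    moreover have "\<forall>s. q (linepath a (act g 1 (act 0 2 p)) s) = q (linepath a (act 0 2 p) s)"
      using Aff_lp[OF T1] a by metis
    moreover have "q (act 0 2 p) = q p" using Aff_q[OF T2] .
    ultimately show ?thesis by (intro exI[of _ 0] exI[of _ "act 0 2 p"] exI[of _ a]) simp
  next
    assume k: "k = 1"
    obtain a where a: "act g 1 a = a" using fix1 by blast
    have T1: "act g 1 \<in> Aff" using act_Aff gk(1) by simp
    have "\<forall>s. q (linepath a p3 s) = q (linepath a p s)" unfolding gk(3) k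
      using Aff_lp[OF T1] a by metis
    then show ?thesis by (intro exI[of _ p] exI[of _ p] exI[of _ a]) simp
  next
    assume k: "k = 2"
    obtain a where a: "act g 2 a = a" using fix2 by blast
    have T1: "act g 2 \<in> Aff" using act_Aff gk(1) by simp
    have "\<forall>s. q (linepath a p3 s) = q (linepath a p s)" unfolding gk(3) k
      using Aff_lp[OF T1] a by metis
    then show ?thesis by (intro exI[of _ p] exI[of _ p] exI[of _ a]) simp
  qed
qed

lemma q_comp_cont: fixes G :: "real \<times> real \<Rightarrow> pt"
  assumes "continuous_on ({0..1} \<times> {0..1}) G"
  shows "continuous_map (prod_topology (top_of_set {0..1}) (top_of_set {0..1})) Mhat_top (q \<circ> G)"
proof -
  have "continuous_map (prod_topology (top_of_set {0..1}) (top_of_set {0..1})) (top_of_set UNIV) G"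
    by (rule cmap_sq[OF assms]) simp
  then have "continuous_map (prod_topology (top_of_set {0..1}) (top_of_set {0..1})) euclidean G" by simp
  then show ?thesis by (rule continuous_map_compose[OF _ q_cont])
qed

lemma fold_null:
  fixes P :: "real \<Rightarrow> pt"
  assumes P: "continuous_on {0..1} P" and qP: "q (P 1) = q (P 0)"
  shows "homotopic_with (\<lambda>h. h 0 = q (P 0) \<and> h 1 = q (P 0)) (top_of_set {0..1}) Mhat_top (q \<circ> P) (\<lambda>t. q (P 0))"
proof -
  define p where "p = P 0"
  define p3 where "p3 = P 1"
  obtain b p2 a where C1: "\<forall>s. q (linepath b p2 s) = q (linepath b p s)"
    and C2: "\<forall>s. q (linepath a p3 s) = q (linepath a p2 s)" and C3: "q p2 = q p"
  proof -
    have "q p3 = q p" using qP unfolding p_def p3_def .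
    from fold_data[OF this] show ?thesis using that by blast
  qed
  define Psi where "Psi = (linepath p b +++ linepath b p2) +++ (linepath p2 a +++ linepath a p3)"
  have Psi_path: "path Psi" unfolding Psi_def by (intro path_join_imp) auto
  have Psi0: "Psi 0 = p" unfolding Psi_def joinpaths_def linepath_def by simp
  have Psi1: "Psi 1 = p3" unfolding Psi_def joinpaths_def linepath_def by simp
  define G where "G = (\<lambda>x::real \<times> real. (1 - fst x) *\<^sub>R P (snd x) + fst x *\<^sub>R Psi (snd x))"
  have Gc: "continuous_on ({0..1} \<times> {0..1}) G" unfolding G_def
  proof (intro continuous_intros)
    show "continuous_on ({0..1} \<times> {0..1}) (\<lambda>x. P (snd x))"
      by (rule continuous_on_compose2[OF P]) (auto intro: continuous_intros)
    show "continuous_on ({0..1} \<times> {0..1}) (\<lambda>x. Psi (snd x))"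
      by (rule continuous_on_compose2[OF Psi_path[unfolded path_def]]) (auto intro: continuous_intros)
  qed
  have h1: "homotopic_with (\<lambda>h. h 0 = q (P 0) \<and> h 1 = q (P 0)) (top_of_set {0..1}) Mhat_top (q \<circ> P) (q \<circ> Psi)"
  proof (rule mk_hom[OF q_comp_cont[OF Gc]])
    show "\<forall>t\<in>{0..1}. (q \<circ> G) (0, t) = (q \<circ> P) t" unfolding G_def by simp
    show "\<forall>t\<in>{0..1}. (q \<circ> G) (1, t) = (q \<circ> Psi) t" unfolding G_def by simp
    show "\<forall>s\<in>{0..1}. (q \<circ> G) (s, 0) = q (P 0) \<and> (q \<circ> G) (s, 1) = q (P 0)"
    proof
      fix s :: real
      have "G (s, 0) = P 0" using Psi0 unfolding G_def p_def by (simp add: algebra_simps)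
      moreover have "G (s, 1) = P 1" using Psi1 unfolding G_def p3_def by (simp add: algebra_simps)
      ultimately show "(q \<circ> G) (s, 0) = q (P 0) \<and> (q \<circ> G) (s, 1) = q (P 0)" using qP by simp
    qed
  qed
  define w1 where "w1 = (\<lambda>t::real. min (4 * t) (2 - 4 * t))"
  define w2 where "w2 = (\<lambda>t::real. min (4 * t - 2) (4 - 4 * t))"
  define N1 where "N1 = (\<lambda>x::real \<times> real. q (linepath p b ((1 - fst x) * w1 (snd x))))"
  define N2 where "N2 = (\<lambda>x::real \<times> real. q (linepath p2 a ((1 - fst x) * w2 (snd x))))"
  define N where "N = (\<lambda>x::real \<times> real. if snd x \<le> 1/2 then N1 x else N2 x)"
  let ?X = "prod_topology (top_of_set {0..1::real}) (top_of_set {0..1::real})"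
  have N1c: "continuous_map ?X Mhat_top N1"
  proof -
    have "continuous_on ({0..1} \<times> {0..1}) (\<lambda>x::real \<times> real. linepath p b ((1 - fst x) * w1 (snd x)))"
      unfolding linepath_def w1_def by (intro continuous_intros)
    from q_comp_cont[OF this] show ?thesis unfolding N1_def o_def .
  qed
  have N2c: "continuous_map ?X Mhat_top N2"
  proof -
    have "continuous_on ({0..1} \<times> {0..1}) (\<lambda>x::real \<times> real. linepath p2 a ((1 - fst x) * w2 (snd x)))"
      unfolding linepath_def w2_def by (intro continuous_intros)
    from q_comp_cont[OF this] show ?thesis unfolding N2_def o_def .
  qed
  have Nc: "continuous_map ?X Mhat_top N"
    unfolding N_def
  proof (rule continuous_map_cases_le)
    show "continuous_map ?X euclideanreal snd"
      using continuous_map_snd[of "top_of_set {0..1::real}" "top_of_set {0..1::real}"] continuous_map_in_subtopology by blast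
    show "continuous_map ?X euclideanreal (\<lambda>x. 1/2)" by simp
    show "continuous_map (subtopology ?X {x \<in> topspace ?X. snd x \<le> 1/2}) Mhat_top N1"
      by (rule continuous_map_from_subtopology[OF N1c])
    show "continuous_map (subtopology ?X {x \<in> topspace ?X. 1/2 \<le> snd x}) Mhat_top N2"
      by (rule continuous_map_from_subtopology[OF N2c])
    fix x :: "real \<times> real" assume "snd x = 1/2"
    then have "w1 (snd x) = 0" "w2 (snd x) = 0" unfolding w1_def w2_def by auto
    then show "N1 x = N2 x" unfolding N1_def N2_def linepath_def using C3 by simp
  qed
  have h2: "homotopic_with (\<lambda>h. h 0 = q (P 0) \<and> h 1 = q (P 0)) (top_of_set {0..1}) Mhat_top (q \<circ> Psi) (\<lambda>t. q (P 0))"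
  proof (rule mk_hom[OF Nc])
    show "\<forall>t\<in>{0..1}. N (0, t) = (q \<circ> Psi) t"
    proof
      fix t :: real assume t: "t \<in> {0..1}"
      consider "t \<le> 1/4" | "1/4 < t" "t \<le> 1/2" | "1/2 < t" "t \<le> 3/4" | "3/4 < t" by linarith
      then show "N (0, t) = (q \<circ> Psi) t"
      proof cases
        case 1
        then have "w1 t = 4 * t" unfolding w1_def by auto
        then show ?thesis using 1 unfolding N_def N1_def Psi_def joinpaths_def by simp
      next
        case 2
        then have w: "w1 t = 2 - 4 * t" unfolding w1_def by auto
        have e1: "N (0, t) = q (linepath p b (2 - 4 * t))" unfolding N_def N1_def using 2 w by simp
        have "Psi t = linepath b p2 (2 * (2 * t) - 1)" using 2 unfolding Psi_def joinpaths_def by simp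
        then have e2: "(q \<circ> Psi) t = q (linepath b p2 (4 * t - 1))" by simp
        have e3: "q (linepath b p2 (4 * t - 1)) = q (linepath b p (4 * t - 1))" using C1 by simp
        have e4: "linepath b p (4 * t - 1) = linepath p b (2 - 4 * t)" using lp_rev[of b p] by simp
        show ?thesis using e1 e2 e3 e4 by simp
      next
        case 3
        then have w: "w2 t = 4 * t - 2" unfolding w2_def by auto
        have e1: "N (0, t) = q (linepath p2 a (4 * t - 2))" unfolding N_def N2_def using 3 w by simp
        have "Psi t = linepath p2 a (2 * (2 * t - 1))" using 3 unfolding Psi_def joinpaths_def by simp
        moreover have "2 * (2 * t - 1) = 4 * t - 2" by simp
        ultimately show ?thesis using e1 by simp
      next
        case 4
        then have w: "w2 t = 4 - 4 * t" unfolding w2_def by auto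
        have e1: "N (0, t) = q (linepath p2 a (4 - 4 * t))" unfolding N_def N2_def using 4 w by simp
        have "Psi t = linepath a p3 (2 * (2 * t - 1) - 1)" using 4 unfolding Psi_def joinpaths_def by simp
        moreover have "2 * (2 * t - 1) - 1 = 4 * t - 3" by simp
        ultimately have e2: "(q \<circ> Psi) t = q (linepath a p3 (4 * t - 3))" by simp
        have e3: "q (linepath a p3 (4 * t - 3)) = q (linepath a p2 (4 * t - 3))" using C2 by simp
        have e4: "linepath a p2 (4 * t - 3) = linepath p2 a (4 - 4 * t)" using lp_rev[of a p2] by simp
        show ?thesis using e1 e2 e3 e4 by simp
      qed
    qed
    show "\<forall>t\<in>{0..1}. N (1, t) = q (P 0)"
      unfolding N_def N1_def N2_def linepath_def p_def[symmetric] using C3 by simp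
    show "\<forall>s\<in>{0..1}. N (s, 0) = q (P 0) \<and> N (s, 1) = q (P 0)"
      unfolding N_def N1_def N2_def linepath_def w1_def w2_def p_def[symmetric] using C3 by simp
  qed
  show ?thesis by (rule homotopic_with_trans[OF h1 h2])
qed


definition idx :: "nat \<Rightarrow> real \<Rightarrow> nat" where "idx n t = min (n - 1) (nat \<lfloor>real n * t\<rfloor>)"

lemma idx_bounds: assumes "n > 0" "t \<in> {0..1}"
  shows "idx n t < n" "real (idx n t) \<le> real n * t" "real n * t \<le> real (idx n t) + 1"
proof -
  have nt: "0 \<le> real n * t" "real n * t \<le> real n" using assms by auto
  show "idx n t < n" unfolding idx_def using assms by simp
  show "real (idx n t) \<le> real n * t"
  proof -
    have "real (nat \<lfloor>real n * t\<rfloor>) \<le> real n * t" using nt by linarith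
    then show ?thesis unfolding idx_def by linarith
  qed
  show "real n * t \<le> real (idx n t) + 1"
  proof (cases "nat \<lfloor>real n * t\<rfloor> \<le> n - 1")
    case True
    then have "idx n t = nat \<lfloor>real n * t\<rfloor>" unfolding idx_def by simp
    then show ?thesis using nt by linarith
  next
    case False
    then have "idx n t = n - 1" unfolding idx_def by simp
    then show ?thesis using nt assms(1) by simp
  qed
qed

lemma interval_overlap:
  assumes "i < j" "real j \<le> u" "u \<le> real i + 1"
  shows "j = Suc i" "u = real j"
proof -
  have "real j \<le> real i + 1" using assms by linarith
  then have "j \<le> Suc i" by linarith
  then show "j = Suc i" using assms(1) by simp
  then show "u = real j" using assms by simp
qed

lemma paste_n:
  fixes F :: "nat \<Rightarrow> 'a \<times> real \<Rightarrow> 'b"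
  assumes n: "n > 0"
    and cont: "\<And>i. i < n \<Longrightarrow> continuous_map (prod_topology Z (top_of_set {0..1})) Y (F i)"
    and agree: "\<And>i z. Suc i < n \<Longrightarrow> z \<in> topspace Z \<Longrightarrow> F i (z, 1) = F (Suc i) (z, 0)"
  defines "G \<equiv> (\<lambda>x. F (idx n (snd x)) (fst x, real n * snd x - real (idx n (snd x))))"
  shows "continuous_map (prod_topology Z (top_of_set {0..1})) Y G"
    and "\<And>i z t. i < n \<Longrightarrow> z \<in> topspace Z \<Longrightarrow> real i \<le> real n * t \<Longrightarrow> real n * t \<le> real i + 1 \<Longrightarrow>
           G (z, t) = F i (z, real n * t - real i)"
proof -
  let ?X = "prod_topology Z (top_of_set {0..1::real})"
  have agree2: "F i (z, real n * t - real i) = F j (z, real n * t - real j)"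
    if ij: "i < n" "j < n" and z: "z \<in> topspace Z" and ti: "real i \<le> real n * t" "real n * t \<le> real i + 1"
      and tj: "real j \<le> real n * t" "real n * t \<le> real j + 1" for i j z t
  proof (cases i j rule: linorder_cases)
    case less
    from interval_overlap[OF less tj(1) ti(2)] have "j = Suc i" "real n * t = real j" .
    then show ?thesis using agree[of i z] ij z by simp
  next
    case greater
    from interval_overlap[OF greater ti(1) tj(2)] have "i = Suc j" "real n * t = real i" .
    then show ?thesis using agree[of j z] ij z by simp
  qed simp
  define T where "T = (\<lambda>i::nat. topspace Z \<times> {t \<in> {0..1::real}. real i \<le> real n * t \<and> real n * t \<le> real i + 1})"
  define f where "f = (\<lambda>i x. F i (fst x, real n * snd x - real i))"
  have cl: "closedin ?X (T i)" for i
  proof -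
    have "closed {t::real. real i \<le> real n * t \<and> real n * t \<le> real i + 1}"
      by (intro closed_Collect_conj closed_Collect_le continuous_intros)
    from closedin_closed_Int[OF this, of "{0..1::real}"]
    have "closedin (top_of_set {0..1}) ({0..1} \<inter> {t::real. real i \<le> real n * t \<and> real n * t \<le> real i + 1})" .
    moreover have "{0..1} \<inter> {t::real. real i \<le> real n * t \<and> real n * t \<le> real i + 1} =
        {t \<in> {0..1::real}. real i \<le> real n * t \<and> real n * t \<le> real i + 1}" by auto
    ultimately have "closedin (top_of_set {0..1}) {t \<in> {0..1::real}. real i \<le> real n * t \<and> real n * t \<le> real i + 1}"
      by simp
    then show ?thesis unfolding T_def closedin_prod_Times_iff by simp
  qed
  have sndc: "continuous_map ?X euclideanreal snd"
    using continuous_map_snd[of Z "top_of_set {0..1::real}"] continuous_map_in_subtopology by blast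
  have fc: "continuous_map (subtopology ?X (T i)) Y (f i)" if i: "i < n" for i
  proof -
    have m: "continuous_map (subtopology ?X (T i)) ?X (\<lambda>x. (fst x, real n * snd x - real i))"
    proof (intro continuous_map_pairedI)
      show "continuous_map (subtopology ?X (T i)) Z fst"
        by (rule continuous_map_from_subtopology[OF continuous_map_fst])
      have "continuous_map ?X euclideanreal (\<lambda>x. real n * snd x - real i)"
      proof -
        have "continuous_map euclideanreal euclideanreal (\<lambda>t. real n * t - real i)"
          by (simp add: continuous_intros)
        from continuous_map_compose[OF sndc this] show ?thesis by (simp add: o_def)
      qed
      then have "continuous_map (subtopology ?X (T i)) euclideanreal (\<lambda>x. real n * snd x - real i)"
        by (rule continuous_map_from_subtopology)
      moreover have "(\<lambda>x. real n * snd x - real i) \<in> topspace (subtopology ?X (T i)) \<rightarrow> {0..1}"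
        unfolding T_def by auto
      ultimately show "continuous_map (subtopology ?X (T i)) (top_of_set {0..1}) (\<lambda>x. real n * snd x - real i)"
        by (rule continuous_map_into_subtopology)
    qed
    from continuous_map_compose[OF m cont[OF i]] show ?thesis unfolding f_def by (simp add: o_def)
  qed
  have val: "G (z, t) = F i (z, real n * t - real i)"
    if i: "i < n" and z: "z \<in> topspace Z" and t: "real i \<le> real n * t" "real n * t \<le> real i + 1" for i z t
  proof -
    have t01: "t \<in> {0..1}"
    proof -
      have "0 \<le> real n * t" "real n * t \<le> real n" using i t by linarith+
      then show ?thesis using n by (simp add: zero_le_mult_iff)
    qed
    note b = idx_bounds[OF n t01]
    show ?thesis unfolding G_def using agree2[OF b(1) i z b(2,3) t] by simp
  qed
  show "continuous_map ?X Y G"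
  proof (rule pasting_lemma_closed[where I = "{..<n}" and T = T and f = f])
    show "finite {..<n}" by simp
    show "closedin ?X (T i)" if "i \<in> {..<n}" for i by (rule cl)
    show "continuous_map (subtopology ?X (T i)) Y (f i)" if "i \<in> {..<n}" for i using fc that by simp
    show "f i x = f j x" if "i \<in> {..<n}" "j \<in> {..<n}" "x \<in> topspace ?X \<inter> T i \<inter> T j" for i j x
      using that agree2[of i j "fst x" "snd x"] unfolding f_def T_def by auto
    show "\<exists>j. j \<in> {..<n} \<and> x \<in> T j \<and> G x = f j x" if "x \<in> topspace ?X" for x
    proof -
      have t01: "snd x \<in> {0..1}" "fst x \<in> topspace Z" using that by auto
      note b = idx_bounds[OF n t01(1)]
      show ?thesis
        by (rule exI[of _ "idx n (snd x)"]) (use b t01 in \<open>auto simp: T_def G_def f_def mem_Times_iff\<close>)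
    qed
  qed
  show "\<And>i z t. i < n \<Longrightarrow> z \<in> topspace Z \<Longrightarrow> real i \<le> real n * t \<Longrightarrow> real n * t \<le> real i + 1 \<Longrightarrow>
           G (z, t) = F i (z, real n * t - real i)" by (rule val)
qed


lemma chain_exists:
  assumes "\<forall>i. Suc i < n \<longrightarrow> q (a (Suc i)) = q (b i)"
  shows "\<exists>hs. (\<forall>i<n. hs i \<in> Aff) \<and> (\<forall>i. Suc i < n \<longrightarrow> hs (Suc i) (a (Suc i)) = hs i (b i))"
  using assms
proof (induction n)
  case 0
  show ?case by (rule exI[of _ "\<lambda>_. id"]) simp
next
  case (Suc n)
  then obtain hs where hs: "\<forall>i<n. hs i \<in> Aff" "\<forall>i. Suc i < n \<longrightarrow> hs (Suc i) (a (Suc i)) = hs i (b i)"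
    by auto
  show ?case
  proof (cases n)
    case 0
    then show ?thesis by (intro exI[of _ "\<lambda>_. id"]) (simp add: Aff_id[unfolded id_def])
  next
    case (Suc m)
    have "q (a n) = q (b m)" using Suc.prems Suc by auto
    then obtain g where g: "g \<in> Aff" "g (a n) = b m" using Aff_exists by blast
    define hs' where "hs' = hs(n := hs m \<circ> g)"
    have "\<forall>i<Suc n. hs' i \<in> Aff"
      using hs(1) Aff_comp[OF _ g(1), of "hs m"] Suc unfolding hs'_def by auto
    moreover have "\<forall>i. Suc i < Suc n \<longrightarrow> hs' (Suc i) (a (Suc i)) = hs' i (b i)"
    proof (intro allI impI)
      fix i assume i: "Suc i < Suc n"
      show "hs' (Suc i) (a (Suc i)) = hs' i (b i)"
      proof (cases "Suc i = n")
        case True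
        then show ?thesis unfolding hs'_def using g(2) Suc by auto
      next
        case False
        then show ?thesis unfolding hs'_def using hs(2) i by auto
      qed
    qed
    ultimately show ?thesis by blast
  qed
qed

lemma dl_0: "dl a f b 0 = a" unfolding dl_def joinpaths_def linepath_def by simp
lemma dl_1: "dl a f b 1 = b" unfolding dl_def joinpaths_def linepath_def by simp
lemma dl_path: "path (dl a f b)" unfolding dl_def by (intro path_join_imp) auto

lemma loop_null:
  fixes \<gamma> :: "real \<Rightarrow> pt set set"
  assumes gc: "continuous_map (top_of_set {0..1}) Mhat_top \<gamma>" and loop: "\<gamma> 1 = \<gamma> 0"
  shows "homotopic_with (\<lambda>h. h 0 = \<gamma> 0 \<and> h 1 = \<gamma> 0) (top_of_set {0..1}) Mhat_top \<gamma> (\<lambda>t. \<gamma> 0)"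
proof -
  let ?I = "top_of_set {0..1::real}"
  define C where "C = {Oo. open Oo \<and> (\<exists>f e. chart f e \<and> (\<forall>t\<in>Oo \<inter> {0..1}. \<gamma> t \<in> q ` ball f e))}"
  have cover: "\<exists>Oo\<in>C. t \<in> Oo" if t: "t \<in> {0..1}" for t
  proof -
    have "\<gamma> t \<in> topspace Mhat_top" using gc t by (auto simp: continuous_map_def)
    then obtain p where p: "\<gamma> t = q p" unfolding topspace_Mhat by auto
    obtain e where ch: "chart p e" using chart_exists by blast
    have "openin Mhat_top (q ` ball p e)" by (rule q_open) simp
    then have "openin ?I {x \<in> topspace ?I. \<gamma> x \<in> q ` ball p e}" using gc by (simp add: continuous_map_def)
    then obtain Oo where O: "open Oo" "{x \<in> {0..1}. \<gamma> x \<in> q ` ball p e} = {0..1} \<inter> Oo"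
      unfolding openin_open by auto
    have "e > 0" using ch unfolding chart_def by simp
    then have "t \<in> Oo" using O(2) t p by auto
    moreover have "Oo \<in> C" unfolding C_def using O ch by blast
    ultimately show ?thesis by blast
  qed
  obtain \<delta> where "0 < \<delta>" and \<delta>: "\<And>T. \<lbrakk>T \<subseteq> {0..1}; diameter T < \<delta>\<rbrakk> \<Longrightarrow> \<exists>B\<in>C. T \<subseteq> B"
  proof (rule Lebesgue_number_lemma [of "{0..1}" C])
    show "C \<noteq> {}" using cover[of 0] by auto
    show "{0..1} \<subseteq> \<Union>C" using cover by blast
    show "\<And>B. B \<in> C \<Longrightarrow> open B" unfolding C_def by blast
  qed auto
  obtain n::nat where N: "n > 1 / \<delta>" using reals_Archimedean2 by blast
  then have n: "n > 0" using \<open>0 < \<delta>\<close> by (metis of_nat_0_less_iff order.strict_trans zero_less_divide_1_iff)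
  have piece: "\<exists>f e. chart f e \<and> (\<forall>t\<in>{real i / n .. (real i + 1) / n}. \<gamma> t \<in> q ` ball f e)" if i: "i < n" for i
  proof -
    have "{real i / n .. (real i + 1) / n} \<subseteq> {0..1}"
      using i by (auto simp: field_split_simps)
    moreover have "diameter {real i / n .. (real i + 1) / n} < \<delta>"
      using \<open>0 < \<delta>\<close> N n by (auto simp: field_split_simps)
    ultimately obtain B where B: "B \<in> C" "{real i / n .. (real i + 1) / n} \<subseteq> B" using \<delta> by blast
    then obtain f e where "chart f e" "\<forall>t\<in>B \<inter> {0..1}. \<gamma> t \<in> q ` ball f e" unfolding C_def by blast
    then show ?thesis using B(2) \<open>{real i / n .. (real i + 1) / n} \<subseteq> {0..1}\<close> by blast
  qed
  define c where "c = (\<lambda>i \<tau>. \<gamma> ((real i + \<tau>) / real n))"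
  have cmap: "continuous_map ?I ?I (\<lambda>\<tau>. (real i + \<tau>) / real n)" if i: "i < n" for i
  proof -
    have "continuous_on {0..1} (\<lambda>\<tau>::real. (real i + \<tau>) / real n)" using n by (intro continuous_intros) auto
    moreover have "(\<lambda>\<tau>::real. (real i + \<tau>) / real n) ` {0..1} \<subseteq> {0..1}"
      using i n by (auto simp: field_split_simps)
    ultimately show ?thesis by (simp add: continuous_map_in_subtopology image_subset_iff Pi_iff)
  qed
  have cc: "continuous_map ?I Mhat_top (c i)" if i: "i < n" for i
    using continuous_map_compose[OF cmap[OF i] gc] unfolding c_def o_def .
  have data: "\<forall>i. \<exists>x. i < n \<longrightarrow> (chart (fst x) (fst (snd x)) \<and>
      (\<forall>t\<in>{0..1}. c i t \<in> q ` ball (fst x) (fst (snd x))) \<and>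
      fst (snd (snd x)) \<in> ball (fst x) (fst (snd x)) \<and> snd (snd (snd x)) \<in> ball (fst x) (fst (snd x)) \<and>
      q (fst (snd (snd x))) = c i 0 \<and> q (snd (snd (snd x))) = c i 1)"
  proof (intro allI, goal_cases)
    case (1 i)
    show ?case
  proof (cases "i < n")
    case True
    obtain f e where fe: "chart f e" "\<forall>t\<in>{real i / n .. (real i + 1) / n}. \<gamma> t \<in> q ` ball f e"
      using piece[OF True] by blast
    have cU: "\<forall>t\<in>{0..1}. c i t \<in> q ` ball f e"
    proof
      fix t :: real assume "t \<in> {0..1}"
      then have "(real i + t) / n \<in> {real i / n .. (real i + 1) / n}" using n by (auto simp: field_split_simps)
      then show "c i t \<in> q ` ball f e" unfolding c_def using fe(2) by blast
    qed
    obtain a where a: "a \<in> ball f e" "q a = c i 0" using cU by force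
    obtain b where b: "b \<in> ball f e" "q b = c i 1" using cU by force
    show ?thesis by (rule exI[of _ "(f, e, a, b)"]) (use fe cU a b in simp)
  qed simp
  qed
  from choice[OF data] obtain X where X: "\<And>i. i < n \<Longrightarrow> chart (fst (X i)) (fst (snd (X i))) \<and>
      (\<forall>t\<in>{0..1}. c i t \<in> q ` ball (fst (X i)) (fst (snd (X i)))) \<and>
      fst (snd (snd (X i))) \<in> ball (fst (X i)) (fst (snd (X i))) \<and> snd (snd (snd (X i))) \<in> ball (fst (X i)) (fst (snd (X i))) \<and>
      q (fst (snd (snd (X i)))) = c i 0 \<and> q (snd (snd (snd (X i)))) = c i 1" by blast
  define f where "f = (\<lambda>i. fst (X i))"
  define e where "e = (\<lambda>i. fst (snd (X i)))"
  define a where "a = (\<lambda>i. fst (snd (snd (X i))))"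
  define b where "b = (\<lambda>i. snd (snd (snd (X i))))"
  have X': "chart (f i) (e i)" "\<forall>t\<in>{0..1}. c i t \<in> q ` ball (f i) (e i)" "a i \<in> ball (f i) (e i)"
    "b i \<in> ball (f i) (e i)" "q (a i) = c i 0" "q (b i) = c i 1" if "i < n" for i
    using X[OF that] unfolding f_def e_def a_def b_def by blast+
  have Hex: "\<forall>i. \<exists>H. i < n \<longrightarrow> (continuous_map (prod_topology ?I ?I) Mhat_top H \<and>
    (\<forall>t\<in>{0..1}. H (0, t) = c i t) \<and> (\<forall>t\<in>{0..1}. H (1, t) = q (dl (a i) (f i) (b i) t)) \<and>
    (\<forall>s\<in>{0..1}. H (s, 0) = c i 0 \<and> H (s, 1) = c i 1))"
  proof (intro allI, goal_cases)
    case (1 i)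
    show ?case
  proof (cases "i < n")
    case True
    show ?thesis using seg_hom[OF X'(1)[OF True] cc[OF True] X'(2-6)[OF True]] by blast
  qed simp
  qed
  from choice[OF Hex] obtain Hs where Hs: "\<And>i. i < n \<Longrightarrow> continuous_map (prod_topology ?I ?I) Mhat_top (Hs i) \<and>
    (\<forall>t\<in>{0..1}. Hs i (0, t) = c i t) \<and> (\<forall>t\<in>{0..1}. Hs i (1, t) = q (dl (a i) (f i) (b i) t)) \<and>
    (\<forall>s\<in>{0..1}. Hs i (s, 0) = c i 0 \<and> Hs i (s, 1) = c i 1)" by blast
  have cSuc: "c i 1 = c (Suc i) 0" for i unfolding c_def by (simp add: add.commute)
  have "\<forall>i. Suc i < n \<longrightarrow> q (a (Suc i)) = q (b i)"
    using X'(5) X'(6) cSuc by (metis Suc_lessD)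
  then obtain hs where hs: "\<forall>i<n. hs i \<in> Aff" "\<forall>i. Suc i < n \<longrightarrow> hs (Suc i) (a (Suc i)) = hs i (b i)"
    using chain_exists by blast
  define G where "G = (\<lambda>x. Hs (idx n (snd x)) (fst x, real n * snd x - real (idx n (snd x))))"
  have PG: "continuous_map (prod_topology ?I ?I) Mhat_top G"
    "\<And>i z t. i < n \<Longrightarrow> z \<in> topspace ?I \<Longrightarrow> real i \<le> real n * t \<Longrightarrow> real n * t \<le> real i + 1 \<Longrightarrow>
           G (z, t) = Hs i (z, real n * t - real i)"
    unfolding G_def
    by (rule paste_n[OF n, of ?I Mhat_top Hs]; (use Hs cSuc in auto)?)+
  define F2 where "F2 = (\<lambda>i (x::real \<times> real). hs i (dl (a i) (f i) (b i) (snd x)))"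
  have F2c: "continuous_map (prod_topology ?I ?I) euclidean (F2 i)" if i: "i < n" for i
  proof -
    have "continuous_on {0..1} (hs i \<circ> dl (a i) (f i) (b i))"
      by (rule continuous_on_compose[OF dl_path[unfolded path_def] Aff_cont[OF hs(1)[rule_format, OF i]]])
    then have c1: "continuous_map ?I euclidean (hs i \<circ> dl (a i) (f i) (b i))" by simp
    have "continuous_map (prod_topology ?I ?I) euclidean ((hs i \<circ> dl (a i) (f i) (b i)) \<circ> snd)"
      by (rule continuous_map_compose[OF continuous_map_snd c1])
    moreover have "F2 i = (hs i \<circ> dl (a i) (f i) (b i)) \<circ> snd" unfolding F2_def by (auto simp: fun_eq_iff)
    ultimately show ?thesis by (simp only:)
  qed
  have F2agree: "F2 i (z, 1) = F2 (Suc i) (z, 0)" if "Suc i < n" for i z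
    unfolding F2_def using hs(2) that by (simp add: dl_0 dl_1)
  define G2 where "G2 = (\<lambda>x. F2 (idx n (snd x)) (fst x, real n * snd x - real (idx n (snd x))))"
  have PG2: "continuous_map (prod_topology ?I ?I) euclidean G2"
    "\<And>i z t. i < n \<Longrightarrow> z \<in> topspace ?I \<Longrightarrow> real i \<le> real n * t \<Longrightarrow> real n * t \<le> real i + 1 \<Longrightarrow>
           G2 (z, t) = F2 i (z, real n * t - real i)"
    unfolding G2_def
    by (rule paste_n[OF n, of ?I euclidean F2]; (use F2c F2agree in auto)?)+
  define Lp where "Lp = (\<lambda>t. G2 (0, t))"
  have Pic: "continuous_on {0..1} Lp"
  proof -
    have "continuous_map ?I (prod_topology ?I ?I) (\<lambda>t. (0, t))"
      by (intro continuous_map_pairedI) (auto simp: continuous_map_id[unfolded id_def])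
    from continuous_map_compose[OF this PG2(1)] show ?thesis unfolding Lp_def o_def by simp
  qed
  have at_t: "G (s, t) = Hs (idx n t) (s, real n * t - real (idx n t)) \<and> Lp t = F2 (idx n t) (0, real n * t - real (idx n t))
      \<and> real n * t - real (idx n t) \<in> {0..1} \<and> idx n t < n"
    if s: "s \<in> {0..1}" and t: "t \<in> {0..1}" for s t
  proof -
    note bd = idx_bounds[OF n t]
    show ?thesis using PG(2)[OF bd(1) _ bd(2,3), of s] PG2(2)[OF bd(1) _ bd(2,3), of 0] s bd
      unfolding Lp_def by auto
  qed
  have G0: "\<forall>t\<in>{0..1}. G (0, t) = \<gamma> t"
  proof
    fix t :: real assume t: "t \<in> {0..1}"
    from at_t[OF _ t, of 0] have "G (0, t) = c (idx n t) (real n * t - real (idx n t))" using Hs by auto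
    also have "\<dots> = \<gamma> t" unfolding c_def using n by simp
    finally show "G (0, t) = \<gamma> t" .
  qed
  have G1: "\<forall>t\<in>{0..1}. G (1, t) = (q \<circ> Lp) t"
  proof
    fix t :: real assume t: "t \<in> {0..1}"
    from at_t[OF _ t, of 1] have e: "G (1, t) = q (dl (a (idx n t)) (f (idx n t)) (b (idx n t)) (real n * t - real (idx n t)))"
      "Lp t = F2 (idx n t) (0, real n * t - real (idx n t))" "idx n t < n" using Hs by auto
    then show "G (1, t) = (q \<circ> Lp) t" unfolding F2_def using Aff_q hs(1) by simp
  qed
  have Gs: "\<forall>s\<in>{0..1}. G (s, 0) = \<gamma> 0 \<and> G (s, 1) = \<gamma> 0"
  proof
    fix s :: real assume s: "s \<in> {0..1}"
    have "G (s, 0) = Hs 0 (s, 0)" using PG(2)[of 0 s 0] n s by simp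
    also have "\<dots> = c 0 0" using Hs[OF n] s by simp
    finally have g0: "G (s, 0) = \<gamma> 0" unfolding c_def by simp
    have "G (s, 1) = Hs (n - 1) (s, real n * 1 - real (n - 1))" using PG(2)[of "n - 1" s 1] n s by simp
    also have "real n * 1 - real (n - 1) = 1" using n by simp
    also have "Hs (n - 1) (s, 1) = c (n - 1) 1" using Hs[of "n - 1"] n s by simp
    also have "\<dots> = \<gamma> 1" unfolding c_def using n by simp
    finally show "G (s, 0) = \<gamma> 0 \<and> G (s, 1) = \<gamma> 0" using g0 loop by simp
  qed
  have h1: "homotopic_with (\<lambda>h. h 0 = \<gamma> 0 \<and> h 1 = \<gamma> 0) ?I Mhat_top \<gamma> (q \<circ> Lp)"
    by (rule mk_hom[OF PG(1) G0 G1 Gs])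
  have qP0: "q (Lp 0) = \<gamma> 0" using G1 Gs by force
  have qP1: "q (Lp 1) = \<gamma> 0" using G1 Gs by force
  have h2: "homotopic_with (\<lambda>h. h 0 = \<gamma> 0 \<and> h 1 = \<gamma> 0) ?I Mhat_top (q \<circ> Lp) (\<lambda>t. \<gamma> 0)"
    using fold_null[OF Pic] qP0 qP1 by simp
  show ?thesis by (rule homotopic_with_trans[OF h1 h2])
qed

theorem proposition4p2:
  shows "simply_connected_space Mhat_top"
  unfolding simply_connected_space_def
proof (intro conjI allI impI)
  show "path_connected_space Mhat_top" by (rule Mhat_path_connected)
  fix p assume "pathin Mhat_top p \<and> p 1 = p 0"
  then show "homotopic_with (\<lambda>h. h 0 = p 0 \<and> h 1 = p 0) (top_of_set {0..1}) Mhat_top p (\<lambda>t. p 0)"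
    using loop_null unfolding pathin_def by blast
qed


end
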